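(* Let $n\ge1$, suppose $\lambda\ge\frac{n+2}{n}$ and $\gamma=\frac{n+2-\varepsilon}{2\lambda}$ for some $\varepsilon\in(0,1)$. Then the function $$u(x,t)=\Psi(x,t):=\int_{\mathbb{R}^n}\Phi(x-y,t)|y|^{-2\gamma}\,dy$$ is a $C^\infty$ positive solution of $u_t-\Delta u=0$ in $\mathbb{R}^n\times(0,\infty)$ such that $u\in L^\lambda(\mathbb{R}^n\times(0,T))$ for all $T>0$, $t^\gamma u(0,t)=u(0,1)$ for all $t>0$, and $t^\gamma u(x,t)$ is bounded between positive constants on the set $\{(x,t)\in\mathbb{R}^n\times(0,\infty):|x|<\sqrt t\}$.
   Context: $\Phi$ is the heat kernel: $\Phi(x,t)=(4\pi t)^{-n/2}e^{-|x|^2/(4t)}$ for $t>0$ and $\Phi(x,t)=0$ for $t\le0$. *)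

theory Defs
  imports "HOL-Analysis.Analysis"
begin

definition heat_kernel :: "real^'n \<Rightarrow> real \<Rightarrow> real" where
  "heat_kernel x t = (if t > 0
     then (4 * pi * t) powr (- real CARD('n) / 2) * exp (- (norm x)\<^sup>2 / (4 * t))
     else 0)"

definition Psi :: "real \<Rightarrow> real^'n \<Rightarrow> real \<Rightarrow> real" where
  "Psi \<gamma> x t = (\<integral>y. heat_kernel (x - y) t * norm y powr (- 2 * \<gamma>) \<partial>lborel)"

fun iter_dderiv :: "('a::real_normed_vector \<Rightarrow> real) \<Rightarrow> 'a list \<Rightarrow> 'a \<Rightarrow> real" where
  "iter_dderiv f [] = f"
| "iter_dderiv f (v # vs) = (\<lambda>p. frechet_derivative (iter_dderiv f vs) (at p) v)"

definition smooth_on :: "'a::real_normed_vector set \<Rightarrow> ('a \<Rightarrow> real) \<Rightarrow> bool" where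
  "smooth_on S f \<longleftrightarrow> (\<forall>vs. \<forall>p\<in>S. iter_dderiv f vs differentiable (at p))"

definition heat_op :: "((real^'n::finite) \<times> real \<Rightarrow> real) \<Rightarrow> (real^'n) \<times> real \<Rightarrow> real" where
  "heat_op u p = iter_dderiv u [(0, 1)] p
     - (\<Sum>i\<in>UNIV. iter_dderiv u [(axis i 1, 0), (axis i 1, 0)] p)"

end

theory Submission
  imports Defs
begin

lemma dyadic_ex:
  fixes r :: real assumes "r \<ge> 1"
  shows "\<exists>k::nat. 2^k \<le> r \<and> r < 2^(k+1)"
proof -
  define k where "k = nat \<lfloor>log 2 r\<rfloor>"
  have l0: "log 2 r \<ge> 0" using assms by simp
  have "real k \<le> log 2 r" using l0 unfolding k_def by linarith
  hence "2 powr real k \<le> 2 powr log 2 r" by simp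
  hence a: "2^k \<le> r" using assms by (simp add: powr_realpow)
  have "log 2 r < real k + 1" using l0 unfolding k_def by linarith
  hence "2 powr log 2 r < 2 powr (real k + 1)" by simp
  hence "r < 2^(k+1)" using assms by (simp add: powr_add powr_realpow)
  with a show ?thesis by blast
qed

lemma ennreal_le_suminf: "(f::nat\<Rightarrow>ennreal) i \<le> suminf f"
  using ennreal_suminf_lessD[of f "f i" i] by (metis not_le_imp_less order_less_irrefl)

lemma cball_borel_sets[measurable]: "cball (c::'a::euclidean_space) r \<in> sets borel"
  by (simp add: borel_closed)

lemma emeasure_cball_n:
  fixes c :: "real^'n"
  assumes "r \<ge> 0"
  shows "emeasure lborel (cball c r) = ennreal (unit_ball_vol (CARD('n)) * r ^ CARD('n))"
  using emeasure_cball[OF assms, of c] by simp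

lemma dyadic_integrable:
  fixes a b :: real
  assumes a: "0 \<le> a" "a < CARD('n)" and b: "CARD('n) < b"
  shows "(\<integral>\<^sup>+ y. ennreal (if norm y \<le> 1 then norm (y::real^'n) powr -a else norm y powr -b) \<partial>lborel) < \<infinity>"
proof -
  define n where "n = CARD('n)"
  define V where "V = unit_ball_vol (real n)"
  have V: "V \<ge> 0" unfolding V_def by simp
  have bound: "ennreal (if norm y \<le> 1 then norm y powr -a else norm y powr -b)
     \<le> (\<Sum>k. ennreal (2 powr ((k+1)*a)) * indicator (cball (0::real^'n) (1/2^k)) y)
      + (\<Sum>k. ennreal (2 powr (-k*b)) * indicator (cball (0::real^'n) (2^(k+1))) y)" for y :: "real^'n"
  proof (cases "y = 0")
    case True then show ?thesis by simp
  next
    case False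
    hence ny: "norm y > 0" by simp
    show ?thesis
    proof (cases "norm y \<le> 1")
      case True
      have "1 / norm y \<ge> 1" using ny True by simp
      then obtain k::nat where k: "2^k \<le> 1/norm y" "1/norm y < 2^(k+1)" using dyadic_ex by blast
      have in1: "y \<in> cball 0 (1/2^k)" using k ny by (simp add: field_simps)
      have "norm y powr -a = (1/norm y) powr a" using ny by (simp add: powr_minus_divide powr_divide)
      also have "\<dots> \<le> (2^(k+1)) powr a" using k ny a by (intro powr_mono2) auto
      also have "\<dots> = 2 powr ((k+1)*a)" by (simp add: powr_powr[symmetric] powr_realpow[symmetric] powr_add)
      finally have le: "norm y powr -a \<le> 2 powr ((k+1)*a)" .
      have "ennreal (if norm y \<le> 1 then norm y powr -a else norm y powr -b) \<le> ennreal (2 powr ((k+1)*a)) * indicator (cball (0::real^'n) (1/2^k)) y"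
        using True le in1 by (simp add: ennreal_leI)
      also have "\<dots> \<le> (\<Sum>k. ennreal (2 powr ((k+1)*a)) * indicator (cball (0::real^'n) (1/2^k)) y)"
        by (rule ennreal_le_suminf[where f="\<lambda>k. ennreal (2 powr ((k+1)*a)) * indicator (cball (0::real^'n) (1/2^k)) y"])
      finally show ?thesis by (simp add: add_increasing2)
    next
      case False
      hence "norm y \<ge> 1" by simp
      then obtain k::nat where k: "2^k \<le> norm y" "norm y < 2^(k+1)" using dyadic_ex by blast
      have in1: "y \<in> cball 0 (2^(k+1))" using k by simp
      have "norm y powr -b \<le> (2^k) powr -b" using k b by (intro powr_mono2') auto
      also have "\<dots> = 2 powr (-k*b)" by (simp add: powr_powr powr_realpow[symmetric])
      finally have le: "norm y powr -b \<le> 2 powr (-k*b)" .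
      have "ennreal (if norm y \<le> 1 then norm y powr -a else norm y powr -b) \<le> ennreal (2 powr (-k*b)) * indicator (cball (0::real^'n) (2^(k+1))) y"
        using False le in1 by (simp add: ennreal_leI)
      also have "\<dots> \<le> (\<Sum>k. ennreal (2 powr (-k*b)) * indicator (cball (0::real^'n) (2^(k+1))) y)"
        by (rule ennreal_le_suminf[where f="\<lambda>k. ennreal (2 powr (-k*b)) * indicator (cball (0::real^'n) (2^(k+1))) y"])
      finally show ?thesis by (simp add: add_increasing)
    qed
  qed
  have "(\<integral>\<^sup>+ y. ennreal (if norm y \<le> 1 then norm (y::real^'n) powr -a else norm y powr -b) \<partial>lborel)
    \<le> (\<integral>\<^sup>+ y. (\<Sum>k. ennreal (2 powr ((k+1)*a)) * indicator (cball (0::real^'n) (1/2^k)) y)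
      + (\<Sum>k. ennreal (2 powr (-k*b)) * indicator (cball (0::real^'n) (2^(k+1))) y) \<partial>lborel)"
    by (intro nn_integral_mono bound)
  also have "\<dots> = (\<Sum>k. ennreal (2 powr ((k+1)*a)) * emeasure lborel (cball (0::real^'n) (1/2^k)))
     + (\<Sum>k. ennreal (2 powr (-k*b)) * emeasure lborel (cball (0::real^'n) (2^(k+1))))"
    apply (subst nn_integral_add)
    apply measurable[1] apply measurable[1]
    apply (subst nn_integral_suminf, measurable)+
    apply (subst nn_integral_cmult_indicator, simp)+
    apply (rule refl)
    done
  also have "\<dots> = (\<Sum>k. ennreal (V * 2 powr a * (2 powr (a - n))^k))
     + (\<Sum>k. ennreal (V * 2 powr n * (2 powr (n - b))^k))"
  proof -
    have e1: "ennreal (2 powr ((k+1)*a)) * emeasure lborel (cball (0::real^'n) (1/2^k)) = ennreal (V * 2 powr a * (2 powr (a - n))^k)" for k::nat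
    proof -
      have p1: "(2 powr (a - n))^k = 2 powr ((a-n)*k)" by (simp add: powr_realpow[symmetric] powr_powr)
      have p2: "(1/2^k)^n = 2 powr (- (real k * n))"
        by (simp add: powr_realpow[symmetric] powr_powr power_one_over powr_minus_divide mult.commute)
      have "2 powr ((k+1)*a) * (V * (1/2^k)^n) = V * (2 powr ((k+1)*a) * 2 powr (- (real k * n)))"
        using p2 by simp
      also have "\<dots> = V * (2 powr a * 2 powr ((a-n)*k))"
      proof -
        have "2 powr ((k+1)*a) * 2 powr (- (real k * n)) = 2 powr ((k+1)*a + - (real k * n))" by (rule powr_add[symmetric])
        also have "(k+1)*a + - (real k * n) = a + (a-n)*k" by (simp add: algebra_simps)
        also have "2 powr (a + (a-n)*k) = 2 powr a * 2 powr ((a-n)*k)" by (rule powr_add)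
        finally show ?thesis by simp
      qed
      finally have "2 powr ((k+1)*a) * (V * (1/2^k)^n) = V * 2 powr a * (2 powr (a - n))^k"
        using p1 by simp
      moreover have "emeasure lborel (cball (0::real^'n) (1/2^k)) = ennreal (V * (1/2^k)^n)"
        by (simp add: emeasure_cball_n V_def n_def)
      ultimately show ?thesis using V by (simp add: ennreal_mult[symmetric] mult.assoc)
    qed
    have e2: "ennreal (2 powr (-k*b)) * emeasure lborel (cball (0::real^'n) (2^(k+1))) = ennreal (V * 2 powr n * (2 powr (n - b))^k)" for k::nat
    proof -
      have p1: "(2 powr (n - b))^k = 2 powr ((n-b)*k)" by (simp add: powr_realpow[symmetric] powr_powr)
      have p2: "(2^(k+1))^n = (2::real) powr ((real k + 1) * n)"
        by (simp add: powr_realpow[symmetric] powr_powr powr_add[symmetric] algebra_simps)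
      have "2 powr (-k*b) * (V * (2^(k+1))^n) = V * (2 powr (-k*b) * 2 powr ((real k + 1) * n))"
        using p2 by simp
      also have "\<dots> = V * (2 powr n * 2 powr ((n-b)*k))"
      proof -
        have "2 powr (-k*b) * 2 powr ((real k + 1) * n) = 2 powr (-k*b + (real k + 1) * n)" by (rule powr_add[symmetric])
        also have "-k*b + (real k + 1) * n = n + (n-b)*k" by (simp add: algebra_simps)
        also have "2 powr (n + (n-b)*k) = 2 powr n * 2 powr ((n-b)*k)" by (rule powr_add)
        finally show ?thesis by simp
      qed
      finally have "2 powr (-k*b) * (V * (2^(k+1))^n) = V * 2 powr n * (2 powr (n - b))^k"
        using p1 by simp
      moreover have "emeasure lborel (cball (0::real^'n) (2^(k+1))) = ennreal (V * (2^(k+1))^n)"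
        by (simp add: emeasure_cball_n V_def n_def)
      ultimately show ?thesis using V by (simp add: ennreal_mult[symmetric] mult.assoc)
    qed
    show ?thesis by (simp only: e1 e2)
  qed
  also have "\<dots> < \<infinity>"
  proof -
    have s1: "summable (\<lambda>k::nat. V * 2 powr a * (2 powr (a - n))^k)"
    proof -
      have "2 powr (a-n) < 2 powr 0" using a by (intro powr_less_mono) (auto simp: n_def)
      thus ?thesis by (intro summable_mult summable_geometric) simp
    qed
    have s2: "summable (\<lambda>k::nat. V * 2 powr n * (2 powr (n - b))^k)"
    proof -
      have "2 powr (n-b) < 2 powr 0" using b by (intro powr_less_mono) (auto simp: n_def)
      hence "norm (2 powr (n-b)::real) < 1" by simp
      hence "summable (\<lambda>k::nat. (2 powr (n-b))^k)" by (rule summable_geometric)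
      thus ?thesis by (rule summable_mult)
    qed
    have t1: "(\<Sum>k. ennreal (V * 2 powr a * (2 powr (a - n))^k)) \<noteq> top"
      by (rule ennreal_suminf_neq_top[OF s1]) (simp add: V)
    have t2: "(\<Sum>k. ennreal (V * 2 powr n * (2 powr (n - b))^k)) \<noteq> top"
      by (rule ennreal_suminf_neq_top[OF s2]) (simp add: V)
    show ?thesis using t1 t2 by (simp add: less_top)
  qed
  finally show ?thesis .
qed

lemma poly_le_exp:
  fixes r c :: real and m :: nat
  assumes "0 \<le> r" "0 < c"
  shows "(1 + r)^m \<le> exp (m^2 / (4 * c)) * exp (c * r^2)"
proof -
  have "(1 + r)^m \<le> (exp r)^m" using assms by (intro power_mono) (auto simp: exp_ge_add_one_self)
  also have "\<dots> = exp (m * r)" by (simp add: exp_of_nat_mult)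
  also have "m * r \<le> m^2/(4 * c) + c * r^2"
  proof -
    have "0 \<le> (2*c*r - m)^2" by simp
    hence "4*c*(m*r) \<le> 4*c*(m^2/(4 * c) + c * r^2)" using assms by (simp add: power2_eq_square algebra_simps)
    thus ?thesis using assms by simp
  qed
  hence "exp (m * r) \<le> exp (m^2/(4 * c) + c * r^2)" by simp
  also have "\<dots> = exp (m^2 / (4 * c)) * exp (c * r^2)" by (simp add: exp_add)
  finally show ?thesis .
qed

lemma gauss_weight_nn_finite:
  fixes s a :: real
  assumes s: "0 < s" and a: "0 \<le> a" "a < CARD('n)"
  shows "(\<integral>\<^sup>+ y. ennreal (exp (- s * norm (y::real^'n)^2) * norm y powr -a) \<partial>lborel) < \<infinity>"
proof -
  define b where "b = real CARD('n) + 1"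
  define m :: nat where "m = CARD('n) + 1"
  define K where "K = exp ((real m)^2 / (4 * s))"
  have K: "K \<ge> 1" unfolding K_def using s by simp
  have pt: "exp (- s * norm y^2) * norm y powr -a \<le> K * (if norm y \<le> 1 then norm y powr -a else norm y powr -b)" for y :: "real^'n"
  proof (cases "norm y \<le> 1")
    case True
    have "exp (- s * norm y^2) * norm y powr -a \<le> 1 * norm y powr -a"
      using s by (intro mult_right_mono) auto
    also have "\<dots> \<le> K * norm y powr -a" using K by (intro mult_right_mono) auto
    finally show ?thesis using True by simp
  next
    case False
    hence r1: "norm y > 1" by simp
    have "norm y powr (b - a) \<le> norm y powr b" using r1 a by (intro powr_mono) auto
    also have "\<dots> = norm y powr real (CARD('n)+1)" by (simp add: b_def add.commute)
    also have "\<dots> = norm y ^ (CARD('n)+1)" using r1 by (simp only: powr_realpow)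
    also have "\<dots> \<le> (1 + norm y) ^ (CARD('n)+1)" by (intro power_mono) auto
    also have "\<dots> \<le> K * exp (s * norm y^2)" unfolding K_def using poly_le_exp[of "norm y" s m] s by (simp add: m_def)
    finally have *: "norm y powr (b - a) \<le> K * exp (s * norm y^2)" .
    have "exp (- s * norm y^2) * norm y powr -a = exp (- s * norm y^2) * norm y powr (b - a) * norm y powr -b"
      using r1 by (simp add: powr_add[symmetric])
    also have "\<dots> \<le> exp (- s * norm y^2) * (K * exp (s * norm y^2)) * norm y powr -b"
      using * by (intro mult_right_mono mult_left_mono) auto
    also have "\<dots> = K * norm y powr -b" by (simp add: exp_minus field_simps)
    finally show ?thesis using False by simp
  qed
  have "(\<integral>\<^sup>+ y. ennreal (exp (- s * norm (y::real^'n)^2) * norm y powr -a) \<partial>lborel)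
     \<le> (\<integral>\<^sup>+ y. ennreal K * ennreal (if norm (y::real^'n) \<le> 1 then norm y powr -a else norm y powr -b) \<partial>lborel)"
  proof (intro nn_integral_mono)
    fix y :: "real^'n"
    have "ennreal K * ennreal (if norm (y::real^'n) \<le> 1 then norm y powr -a else norm y powr -b)
      = ennreal (K * (if norm (y::real^'n) \<le> 1 then norm y powr -a else norm y powr -b))"
      using K by (simp add: ennreal_mult)
    thus "ennreal (exp (- s * norm (y::real^'n)^2) * norm y powr -a) \<le> ennreal K * ennreal (if norm (y::real^'n) \<le> 1 then norm y powr -a else norm y powr -b)"
      using pt[of y] by (simp add: ennreal_leI)
  qed
  also have "\<dots> = ennreal K * (\<integral>\<^sup>+ y. ennreal (if norm (y::real^'n) \<le> 1 then norm y powr -a else norm y powr -b) \<partial>lborel)"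
    by (rule nn_integral_cmult) measurable
  also have "\<dots> < \<infinity>" using dyadic_integrable[OF a, of b] by (simp add: b_def ennreal_mult_less_top)
  finally show ?thesis .
qed

lemma gauss_weight_integrable:
  fixes s a :: real
  assumes s: "0 < s" and a: "0 \<le> a" "a < CARD('n)"
  shows "integrable lborel (\<lambda>y::real^'n. exp (- s * norm y^2) * norm y powr -a)"
  apply (rule integrableI_bounded)
   apply measurable
  using gauss_weight_nn_finite[OF assms] by simp

definition hk :: "(real^'n) \<times> real \<Rightarrow> real" where
  "hk q = heat_kernel (fst q) (snd q)"

inductive_set polys :: "((real^'n) \<times> real \<Rightarrow> real) set" where
  pc: "(\<lambda>q. c) \<in> polys"
| pz: "(\<lambda>q. fst q $ i) \<in> polys"
| pt: "(\<lambda>q. snd q) \<in> polys"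
| pinv: "(\<lambda>q. 1 / snd q) \<in> polys"
| padd: "P \<in> polys \<Longrightarrow> Q \<in> polys \<Longrightarrow> (\<lambda>q. P q + Q q) \<in> polys"
| pmul: "P \<in> polys \<Longrightarrow> Q \<in> polys \<Longrightarrow> (\<lambda>q. P q * Q q) \<in> polys"

lemma polys_sum: "finite S \<Longrightarrow> (\<And>i. i \<in> S \<Longrightarrow> f i \<in> polys) \<Longrightarrow> (\<lambda>q. \<Sum>i\<in>S. f i q) \<in> polys"
proof (induction S rule: finite_induct)
  case empty then show ?case using pc[of 0] by simp
next
  case (insert x F) then show ?case using padd[of "f x" "\<lambda>q. \<Sum>i\<in>F. f i q"] by simp
qed

lemma polys_diff: "P \<in> polys \<Longrightarrow> Q \<in> polys \<Longrightarrow> (\<lambda>q. P q - Q q) \<in> polys"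
  using padd[OF _ pmul[OF pc[of "-1"]], of P Q] by simp

lemma polys_cmul: assumes "P \<in> polys" shows "(\<lambda>q. c * P q) \<in> polys"
  using pmul[OF pc[of c] assms] by simp

lemma polys_div: assumes "P \<in> polys" shows "(\<lambda>q. P q / c) \<in> polys"
  using pmul[OF assms pc[of "1/c"]] by simp

lemma polys_deriv:
  fixes P :: "(real^'n) \<times> real \<Rightarrow> real"
  assumes "P \<in> polys"
  shows "\<exists>D. (\<forall>q. snd q > 0 \<longrightarrow> (P has_derivative D q) (at q)) \<and> (\<forall>v. (\<lambda>q. D q v) \<in> polys)"
  using assms
proof (induction rule: polys.induct)
  case (pc c)
  show ?case by (rule exI[of _ "\<lambda>q v. 0"]) (auto intro: polys.pc)
next
  case (pz i)
  show ?case
  proof (rule exI[of _ "\<lambda>q (v::(real^'n) \<times> real). fst v $ i"], intro conjI allI impI)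
    have bl: "bounded_linear (\<lambda>v::(real^'n) \<times> real. fst v $ i)"
      using bounded_linear_compose[OF bounded_linear_vec_nth[of i] bounded_linear_fst] by (simp add: o_def)
    fix q :: "(real^'n) \<times> real"
    show "((\<lambda>q. fst q $ i) has_derivative (\<lambda>v. fst v $ i)) (at q)"
      by (rule bounded_linear_imp_has_derivative[OF bl])
  qed (auto intro: polys.pc)
next
  case pt
  show ?case
    by (rule exI[of _ "\<lambda>q v. snd v"]) (auto intro!: derivative_eq_intros intro: polys.pc)
next
  case pinv
  show ?case
  proof (rule exI[of _ "\<lambda>q v. - snd v * ((1 / snd q) * (1 / snd q))"], intro conjI allI impI)
    fix q :: "(real^'n) \<times> real" assume "snd q > 0"
    thus "((\<lambda>q. 1 / snd q) has_derivative (\<lambda>v. - snd v * ((1 / snd q) * (1 / snd q)))) (at q)"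
      by (auto intro!: derivative_eq_intros simp: fun_eq_iff field_simps)
  next
    fix v :: "(real^'n) \<times> real"
    show "(\<lambda>q. - snd v * ((1 / snd q) * (1 / snd q))) \<in> polys"
      by (intro polys.pmul polys.pc polys.pinv)
  qed
next
  case (padd P Q)
  then obtain DP DQ where P: "\<forall>q. snd q > 0 \<longrightarrow> (P has_derivative DP q) (at q)" "\<forall>v. (\<lambda>q. DP q v) \<in> polys"
    and Q: "\<forall>q. snd q > 0 \<longrightarrow> (Q has_derivative DQ q) (at q)" "\<forall>v. (\<lambda>q. DQ q v) \<in> polys" by blast
  show ?case
    by (rule exI[of _ "\<lambda>q v. DP q v + DQ q v"])
       (auto intro!: has_derivative_add P(1)[rule_format] Q(1)[rule_format] polys.padd P(2)[rule_format] Q(2)[rule_format])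
next
  case (pmul P Q)
  then obtain DP DQ where P: "\<forall>q. snd q > 0 \<longrightarrow> (P has_derivative DP q) (at q)" "\<forall>v. (\<lambda>q. DP q v) \<in> polys"
    and Q: "\<forall>q. snd q > 0 \<longrightarrow> (Q has_derivative DQ q) (at q)" "\<forall>v. (\<lambda>q. DQ q v) \<in> polys" by blast
  show ?case
    by (rule exI[of _ "\<lambda>q v. P q * DQ q v + DP q v * Q q"])
       (auto intro!: has_derivative_mult P(1)[rule_format] Q(1)[rule_format] polys.padd polys.pmul pmul.hyps P(2)[rule_format] Q(2)[rule_format])
qed

lemma polys_bound:
  fixes P :: "(real^'n) \<times> real \<Rightarrow> real"
  assumes "P \<in> polys" "0 < lo"
  shows "\<exists>C m. C \<ge> 0 \<and> (\<forall>q. lo \<le> snd q \<and> snd q \<le> hi \<longrightarrow> \<bar>P q\<bar> \<le> C * (1 + norm (fst q))^m)"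
  using assms(1)
proof (induction rule: polys.induct)
  case (pc c)
  show ?case by (rule exI[of _ "\<bar>c\<bar>"], rule exI[of _ 0]) auto
next
  case (pz i)
  show ?case
  proof (rule exI[of _ 1], rule exI[of _ 1], intro conjI allI impI)
    fix q :: "(real^'n) \<times> real"
    have "\<bar>fst q $ i\<bar> \<le> norm (fst q)" by (rule component_le_norm_cart)
    thus "\<bar>fst q $ i\<bar> \<le> 1 * (1 + norm (fst q)) ^ 1" by simp
  qed simp
next
  case pt
  show ?case
    by (rule exI[of _ "\<bar>hi\<bar>"], rule exI[of _ 0]) (use assms(2) in auto)
next
  case pinv
  show ?case
    by (rule exI[of _ "1/lo"], rule exI[of _ 0]) (use assms(2) in \<open>auto simp: field_simps\<close>)
next
  case (padd P Q)
  then obtain C1 m1 C2 m2 where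
    P: "C1 \<ge> 0" "\<forall>q. lo \<le> snd q \<and> snd q \<le> hi \<longrightarrow> \<bar>P q\<bar> \<le> C1 * (1 + norm (fst q))^m1" and
    Q: "C2 \<ge> 0" "\<forall>q. lo \<le> snd q \<and> snd q \<le> hi \<longrightarrow> \<bar>Q q\<bar> \<le> C2 * (1 + norm (fst q))^m2" by blast
  show ?case
  proof (rule exI[of _ "C1 + C2"], rule exI[of _ "m1 + m2"], intro conjI allI impI)
    fix q :: "(real^'n) \<times> real" assume q: "lo \<le> snd q \<and> snd q \<le> hi"
    define r where "r = 1 + norm (fst q)"
    have r: "r \<ge> 1" unfolding r_def by simp
    have "\<bar>P q + Q q\<bar> \<le> C1 * r^m1 + C2 * r^m2" using P Q q unfolding r_def
      by (smt (verit, ccfv_SIG))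
    also have "\<dots> \<le> C1 * r^(m1+m2) + C2 * r^(m1+m2)"
      using r P(1) Q(1) by (intro add_mono mult_left_mono power_increasing) auto
    finally show "\<bar>P q + Q q\<bar> \<le> (C1 + C2) * (1 + norm (fst q))^(m1+m2)"
      unfolding r_def by (simp add: algebra_simps)
  qed (use P Q in auto)
next
  case (pmul P Q)
  then obtain C1 m1 C2 m2 where
    P: "C1 \<ge> 0" "\<forall>q. lo \<le> snd q \<and> snd q \<le> hi \<longrightarrow> \<bar>P q\<bar> \<le> C1 * (1 + norm (fst q))^m1" and
    Q: "C2 \<ge> 0" "\<forall>q. lo \<le> snd q \<and> snd q \<le> hi \<longrightarrow> \<bar>Q q\<bar> \<le> C2 * (1 + norm (fst q))^m2" by blast
  show ?case
  proof (rule exI[of _ "C1 * C2"], rule exI[of _ "m1 + m2"], intro conjI allI impI)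
    fix q :: "(real^'n) \<times> real" assume q: "lo \<le> snd q \<and> snd q \<le> hi"
    have "\<bar>P q * Q q\<bar> = \<bar>P q\<bar> * \<bar>Q q\<bar>" by (simp add: abs_mult)
    also have "\<dots> \<le> (C1 * (1 + norm (fst q))^m1) * (C2 * (1 + norm (fst q))^m2)"
      using P(2)[rule_format, OF q] Q(2)[rule_format, OF q] P(1) Q(1) by (intro mult_mono) auto
    finally show "\<bar>P q * Q q\<bar> \<le> (C1 * C2) * (1 + norm (fst q))^(m1+m2)"
      by (simp add: algebra_simps power_add)
  qed (use P Q in auto)
qed

definition hkR :: "(real^'n) \<times> real \<Rightarrow> (real^'n) \<times> real \<Rightarrow> real" where
  "hkR q v = - (real CARD('n) / 2) * snd v * (1 / snd q) + (fst q \<bullet> fst q) / 4 * snd v * ((1 / snd q) * (1 / snd q))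
      - (fst q \<bullet> fst v) / 2 * (1 / snd q)"

lemma open_tpos: "open {q :: (real^'n) \<times> real. 0 < snd q}"
  by (intro open_Collect_less continuous_intros)

lemma hk_eq: fixes q :: "(real^'n) \<times> real" shows "snd q > 0 \<Longrightarrow> hk q = (4 * pi * snd q) powr (- real CARD('n) / 2) * exp (- (fst q \<bullet> fst q) / (4 * snd q))"
  by (simp add: hk_def heat_kernel_def power2_norm_eq_inner)

lemma hk_has_derivative:
  fixes q :: "(real^'n) \<times> real"
  assumes "snd q > 0"
  shows "(hk has_derivative (\<lambda>v. hk q * hkR q v)) (at q)"
proof -
  have g: "((\<lambda>q. - (fst q \<bullet> fst q) / (4 * snd q)) has_derivative 
   (\<lambda>v. (fst q \<bullet> fst q) / 4 * snd v * ((1 / snd q) * (1 / snd q))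
      - (fst q \<bullet> fst v) / 2 * (1 / snd q))) (at q)"
    using assms by (auto intro!: derivative_eq_intros simp: inner_commute fun_eq_iff field_simps)
  have "((\<lambda>q. (4 * pi * snd q) powr (- real CARD('n) / 2) * exp (- (fst q \<bullet> fst q) / (4 * snd q))) has_derivative 
   (\<lambda>v. (4 * pi * snd q) powr (- real CARD('n) / 2) * exp (- (fst q \<bullet> fst q) / (4 * snd q)) * hkR q v)) (at q)"
  proof -
    have p: "((\<lambda>q. (4 * pi * snd q) powr (- real CARD('n) / 2)) has_derivative (\<lambda>v. (4 * pi * snd q) powr (- real CARD('n) / 2) * (- (real CARD('n) / 2) * snd v * (1 / snd q)))) (at q)"
      using assms by (auto intro!: derivative_eq_intros simp: fun_eq_iff field_simps)
    show ?thesis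
      apply (rule has_derivative_eq_rhs[OF has_derivative_mult[OF p has_derivative_exp[OF g]]])
      by (simp add: fun_eq_iff hkR_def algebra_simps)
  qed
  hence "((\<lambda>q. (4 * pi * snd q) powr (- real CARD('n) / 2) * exp (- (fst q \<bullet> fst q) / (4 * snd q))) has_derivative 
   (\<lambda>v. hk q * hkR q v)) (at q)" using hk_eq[OF assms] by simp
  thus ?thesis
    by (rule has_derivative_transform_within_open[OF _ open_tpos]) (use assms in \<open>auto simp: hk_eq\<close>)
qed

lemma hkR_polys: fixes v :: "(real^'n) \<times> real" shows "(\<lambda>q. hkR q v) \<in> polys"
proof -
  have e: "hkR q v = - (real CARD('n) / 2) * snd v * (1 / snd q) + 
     (\<Sum>i\<in>UNIV. fst q $ i * fst q $ i) / 4 * snd v * ((1 / snd q) * (1 / snd q))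
      - (\<Sum>i\<in>UNIV. fst v $ i * fst q $ i) / 2 * (1 / snd q)" for q :: "(real^'n) \<times> real"
    by (simp add: hkR_def inner_vec_def mult.commute)
  show ?thesis unfolding e
    by (intro polys_diff padd pmul pc pinv polys_sum pz finite polys_div) 
qed

lemma hk_nonneg: "hk q \<ge> 0"
  by (simp add: hk_def heat_kernel_def)

lemma fst_borel_measurable[measurable]: "(fst :: ('a::second_countable_topology \<times> 'b::second_countable_topology) \<Rightarrow> 'a) \<in> borel_measurable borel"
  by (intro borel_measurable_continuous_onI continuous_on_fst continuous_on_id)

lemma snd_borel_measurable[measurable]: "(snd :: ('a::second_countable_topology \<times> 'b::second_countable_topology) \<Rightarrow> 'b) \<in> borel_measurable borel"
  by (intro borel_measurable_continuous_onI continuous_on_snd continuous_on_id)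

lemma hk_measurable[measurable]: "(hk :: (real^'n) \<times> real \<Rightarrow> real) \<in> borel_measurable borel"
  unfolding hk_def[abs_def] heat_kernel_def by measurable

lemma polys_measurable:
  fixes P :: "(real^'n) \<times> real \<Rightarrow> real"
  assumes "P \<in> polys" shows "P \<in> borel_measurable borel"
  using assms
proof induction
  case (pz i) show ?case by (intro borel_measurable_continuous_onI continuous_intros)
next
  case pinv show ?case by (intro borel_measurable_divide borel_measurable_const snd_borel_measurable)
qed (auto intro: borel_measurable_add borel_measurable_times)

lemma hk_upper:
  fixes z :: "real^'n"
  assumes t0: "0 < t0" and t: "t0/2 \<le> t" "t \<le> 3*t0/2"
  shows "hk (z, t) \<le> (2 * pi * t0) powr (- real CARD('n) / 2) * exp (- (norm z ^ 2) / (6 * t0))"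
proof -
  have tpos: "t > 0" using t t0 by simp
  have "hk (z,t) = (4 * pi * t) powr (- real CARD('n) / 2) * exp (- (norm z ^ 2) / (4 * t))"
    using tpos by (simp add: hk_def heat_kernel_def)
  also have "\<dots> \<le> (2 * pi * t0) powr (- real CARD('n) / 2) * exp (- (norm z ^ 2) / (6 * t0))"
  proof (intro mult_mono)
    show "(4 * pi * t) powr (- real CARD('n) / 2) \<le> (2 * pi * t0) powr (- real CARD('n) / 2)"
      using t t0 by (intro powr_mono2') auto
    have "norm z ^ 2 / (6 * t0) \<le> norm z ^ 2 / (4 * t)"
      using t t0 by (intro divide_left_mono) auto
    thus "exp (- (norm z ^ 2) / (4 * t)) \<le> exp (- (norm z ^ 2) / (6 * t0))" by simp
  qed auto
  finally show ?thesis .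
qed

lemma kernel_bound:
  fixes P :: "(real^'n) \<times> real \<Rightarrow> real"
  assumes P: "P \<in> polys" and t0: "0 < t0"
  shows "\<exists>C\<ge>0. \<forall>z t. t0/2 \<le> t \<and> t \<le> 3*t0/2 \<longrightarrow> \<bar>P (z, t) * hk (z, t)\<bar> \<le> C * exp (- (norm z ^ 2) / (12 * t0))"
proof -
  obtain C m where C: "C \<ge> 0" "\<forall>q. t0/2 \<le> snd q \<and> snd q \<le> 3*t0/2 \<longrightarrow> \<bar>P q\<bar> \<le> C * (1 + norm (fst q))^m"
    using polys_bound[OF P, of "t0/2" "3*t0/2"] t0 by auto
  define A where "A = (2 * pi * t0) powr (- real CARD('n) / 2)"
  have A: "A \<ge> 0" unfolding A_def by simp
  define E where "E = exp ((real m)^2 / (4 * (1/(12*t0))))"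
  show ?thesis
  proof (rule exI[of _ "C * A * E"], intro conjI allI impI)
    show "C * A * E \<ge> 0" using C A by (simp add: E_def)
    fix z :: "real^'n" and t :: real assume t: "t0/2 \<le> t \<and> t \<le> 3*t0/2"
    define r where "r = norm z"
    have r: "r \<ge> 0" unfolding r_def by simp
    have "\<bar>P (z, t) * hk (z, t)\<bar> = \<bar>P (z,t)\<bar> * hk (z,t)" using hk_nonneg[of "(z,t)"] by (simp add: abs_mult)
    also have "\<dots> \<le> (C * (1 + r)^m) * (A * exp (- (r^2) / (6 * t0)))"
      using C(2)[rule_format, of "(z,t)"] t hk_upper[OF t0, of t z] hk_nonneg C(1)
      unfolding r_def A_def by (intro mult_mono) auto
    also have "\<dots> \<le> (C * (E * exp ((1/(12*t0)) * r^2))) * (A * exp (- (r^2) / (6 * t0)))"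
      using poly_le_exp[OF r, of "1/(12*t0)" m] t0 C(1) A unfolding E_def
      by (intro mult_right_mono mult_left_mono) auto
    also have "\<dots> = C * A * E * (exp ((1/(12*t0)) * r^2) * exp (- (r^2) / (6 * t0)))" by (simp add: algebra_simps)
    also have "exp ((1/(12*t0)) * r^2) * exp (- (r^2) / (6 * t0)) = exp (- (r^2) / (12 * t0))"
      using t0 by (simp add: exp_add[symmetric] field_simps)
    finally show "\<bar>P (z, t) * hk (z, t)\<bar> \<le> C * A * E * exp (- (norm z ^ 2) / (12 * t0))" unfolding r_def .
  qed
qed

lemma shift_gauss:
  fixes x0 x y :: "real^'n"
  assumes c: "c > 0" and xx: "norm (x - x0) \<le> 1"
  shows "exp (- (norm (x - y) ^ 2) / c) \<le> exp ((norm x0 + 1)^2 / c) * exp (- (1 / (2 * c)) * norm y ^ 2)"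
proof -
  define R where "R = norm x0 + 1"
  have "norm x \<le> R" using xx norm_triangle_ineq2[of x x0] unfolding R_def by linarith
  hence "norm y \<le> norm (x - y) + R" using norm_triangle_ineq3[of x y] norm_minus_commute[of x y] by (smt (verit) norm_triangle_sub)
  hence "norm y ^ 2 \<le> (norm (x - y) + R)^2" by (intro power_mono) auto
  also have "\<dots> \<le> 2 * norm (x - y) ^ 2 + 2 * R^2"
    using sum_squares_ge_zero[of "norm (x-y) - R" 0] by (simp add: power2_eq_square algebra_simps)
  finally have "norm y ^ 2 \<le> 2 * norm (x - y) ^ 2 + 2 * R^2" .
  hence "- (norm (x - y) ^ 2) / c \<le> R^2 / c + (- (1 / (2 * c)) * norm y ^ 2)"
    using c by (simp add: field_simps)
  hence "exp (- (norm (x - y) ^ 2) / c) \<le> exp (R^2 / c + (- (1 / (2 * c)) * norm y ^ 2))" by simp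
  also have "\<dots> = exp (R^2 / c) * exp (- (1 / (2 * c)) * norm y ^ 2)" by (rule exp_add)
  finally show ?thesis unfolding R_def .
qed

lemma kernel_dom:
  fixes P :: "(real^'n) \<times> real \<Rightarrow> real" and x0 :: "real^'n"
  assumes P: "P \<in> polys" and t0: "0 < t0"
  shows "\<exists>C\<ge>0. \<forall>x t y. norm (x - x0) \<le> 1 \<and> t0/2 \<le> t \<and> t \<le> 3*t0/2 \<longrightarrow>
     \<bar>P (x - y, t) * hk (x - y, t)\<bar> \<le> C * exp (- (1 / (24 * t0)) * norm y ^ 2)"
proof -
  obtain C where C: "C \<ge> 0" "\<forall>z t. t0/2 \<le> t \<and> t \<le> 3*t0/2 \<longrightarrow> \<bar>P (z, t) * hk (z, t)\<bar> \<le> C * exp (- (norm z ^ 2) / (12 * t0))"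
    using kernel_bound[OF P t0] by blast
  define E where "E = exp ((norm x0 + 1)^2 / (12 * t0))"
  show ?thesis
  proof (rule exI[of _ "C * E"], intro conjI allI impI)
    show "C * E \<ge> 0" using C by (simp add: E_def)
    fix x t y assume h: "norm (x - x0) \<le> 1 \<and> t0/2 \<le> t \<and> t \<le> 3*t0/2"
    have "\<bar>P (x - y, t) * hk (x - y, t)\<bar> \<le> C * exp (- (norm (x - y) ^ 2) / (12 * t0))"
      using C(2) h by blast
    also have "\<dots> \<le> C * (E * exp (- (1 / (2 * (12 * t0))) * norm y ^ 2))"
      using shift_gauss[of "12 * t0" x x0 y] h t0 C(1) unfolding E_def by (intro mult_left_mono) auto
    finally show "\<bar>P (x - y, t) * hk (x - y, t)\<bar> \<le> C * E * exp (- (1 / (24 * t0)) * norm y ^ 2)"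
      by (simp add: mult.assoc)
  qed
qed

definition U :: "real \<Rightarrow> ((real^'n) \<times> real \<Rightarrow> real) \<Rightarrow> (real^'n) \<times> real \<Rightarrow> real" where
  "U a K p = (\<integral>y. K (fst p - y, snd p) * norm y powr (-a) \<partial>lborel)"

lemma kernel_integrable:
  fixes P :: "(real^'n) \<times> real \<Rightarrow> real" and x :: "real^'n" and a :: real
  assumes P: "P \<in> polys" and t: "0 < t" and a: "0 \<le> a" "a < CARD('n)"
  shows "integrable lborel (\<lambda>y. P (x - y, t) * hk (x - y, t) * norm y powr (-a))"
proof -
  obtain C where C: "C \<ge> 0" "\<forall>x' t' y. norm (x' - x) \<le> 1 \<and> t/2 \<le> t' \<and> t' \<le> 3*t/2 \<longrightarrow>
     \<bar>P (x' - y, t') * hk (x' - y, t')\<bar> \<le> C * exp (- (1 / (24 * t)) * norm y ^ 2)"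
    using kernel_dom[OF P t, of x] by blast
  have Pm[measurable]: "P \<in> borel_measurable borel" by (rule polys_measurable[OF P])
  show ?thesis
  proof (rule Bochner_Integration.integrable_bound)
    show "integrable lborel (\<lambda>y::real^'n. C * (exp (- (1 / (24 * t)) * norm y^2) * norm y powr -a))"
      using gauss_weight_integrable[of "1 / (24 * t)" a] t a by (intro integrable_mult_right) auto
    show "(\<lambda>y. P (x - y, t) * hk (x - y, t) * norm y powr (-a)) \<in> borel_measurable lborel"
      by measurable
    show "AE y in lborel. norm (P (x - y, t) * hk (x - y, t) * norm y powr (-a)) \<le> norm (C * (exp (- (1 / (24 * t)) * norm y^2) * norm y powr -a))"
    proof (intro AE_I2)
      fix y :: "real^'n"
      have "\<bar>P (x - y, t) * hk (x - y, t)\<bar> \<le> C * exp (- (1 / (24 * t)) * norm y ^ 2)"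
        using C(2) t by auto
      hence "\<bar>P (x - y, t) * hk (x - y, t)\<bar> * norm y powr (-a) \<le> C * exp (- (1 / (24 * t)) * norm y ^ 2) * norm y powr (-a)"
        by (intro mult_right_mono) auto
      thus "norm (P (x - y, t) * hk (x - y, t) * norm y powr (-a)) \<le> norm (C * (exp (- (1 / (24 * t)) * norm y^2) * norm y powr -a))"
        using C(1) by (simp add: abs_mult mult.assoc)
    qed
  qed
qed

lemma kernel_deriv:
  fixes P :: "(real^'n) \<times> real \<Rightarrow> real"
  assumes P: "P \<in> polys"
  shows "\<exists>D. (\<forall>q. snd q > 0 \<longrightarrow> ((\<lambda>q. P q * hk q) has_derivative D q) (at q)) \<and>
             (\<forall>v. \<exists>P'\<in>polys. \<forall>q. snd q > 0 \<longrightarrow> D q v = P' q * hk q)"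
proof -
  obtain DP where DP: "\<forall>q. snd q > 0 \<longrightarrow> (P has_derivative DP q) (at q)" "\<forall>v. (\<lambda>q. DP q v) \<in> polys"
    using polys_deriv[OF P] by blast
  show ?thesis
  proof (rule exI[of _ "\<lambda>q v. P q * (hk q * hkR q v) + DP q v * hk q"], intro conjI allI impI)
    fix q :: "(real^'n) \<times> real" assume "snd q > 0"
    thus "((\<lambda>q. P q * hk q) has_derivative (\<lambda>v. P q * (hk q * hkR q v) + DP q v * hk q)) (at q)"
      using DP(1)[rule_format, of q] hk_has_derivative[of q] by (intro has_derivative_mult) auto
  next
    fix v :: "(real^'n) \<times> real"
    show "\<exists>P'\<in>polys. \<forall>q. snd q > 0 \<longrightarrow> P q * (hk q * hkR q v) + DP q v * hk q = P' q * hk q"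
      by (rule bexI[of _ "\<lambda>q. P q * hkR q v + DP q v"])
         (auto simp: algebra_simps intro!: padd pmul P hkR_polys DP(2)[rule_format])
  qed
qed

lemma linear_expand:
  fixes f :: "'a::euclidean_space \<Rightarrow> real"
  assumes "linear f"
  shows "f h = (\<Sum>j\<in>Basis. (h \<bullet> j) * f j)"
proof -
  have "f h = f (\<Sum>j\<in>Basis. (h \<bullet> j) *\<^sub>R j)" by (simp add: euclidean_representation)
  also have "\<dots> = (\<Sum>j\<in>Basis. (h \<bullet> j) * f j)"
    using assms by (simp add: linear_sum linear_scale)
  finally show ?thesis .
qed

lemma deriv_along:
  fixes F :: "'a::real_normed_vector \<Rightarrow> real"
  assumes "(F has_derivative DF) (at (q + s *\<^sub>R h))"
  shows "((\<lambda>s. F (q + s *\<^sub>R h)) has_real_derivative DF h) (at s)"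
proof -
  have l: "((\<lambda>s. q + s *\<^sub>R h) has_derivative (\<lambda>s. s *\<^sub>R h)) (at s)"
    by (auto intro!: derivative_eq_intros)
  have "((\<lambda>s. F (q + s *\<^sub>R h)) has_derivative (\<lambda>x. DF (x *\<^sub>R h))) (at s)"
    using has_derivative_compose[OF l assms] by (simp add: o_def)
  moreover have "(\<lambda>x. DF (x *\<^sub>R h)) = (*) (DF h)"
    using linear_scale[OF has_derivative_linear[OF assms]] by (auto simp: fun_eq_iff)
  ultimately show ?thesis by (simp add: has_field_derivative_def)
qed

lemma U_has_derivative:
  fixes P :: "(real^'n) \<times> real \<Rightarrow> real" and a :: real and p0 :: "(real^'n) \<times> real"
    and D :: "(real^'n) \<times> real \<Rightarrow> (real^'n) \<times> real \<Rightarrow> real"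
  assumes P: "P \<in> polys" and a: "0 \<le> a" "a < CARD('n)" and t0: "snd p0 > 0"
    and D: "\<forall>q. snd q > 0 \<longrightarrow> ((\<lambda>q. P q * hk q) has_derivative D q) (at q)"
    and DP: "\<forall>v. \<exists>P'\<in>polys. \<forall>q. snd q > 0 \<longrightarrow> D q v = P' q * hk q"
  shows "(U a (\<lambda>q. P q * hk q) has_derivative (\<lambda>v. U a (\<lambda>q. D q v) p0)) (at p0)"
proof -
  obtain x0 t0 where p0: "p0 = (x0, t0)" by (cases p0)
  have t0pos: "t0 > 0" using t0 p0 by simp
  define \<delta> where "\<delta> = min 1 (t0/2)"
  have \<delta>: "\<delta> > 0" "\<delta> \<le> 1" "\<delta> \<le> t0/2" using t0pos by (auto simp: \<delta>_def)
  define w where "w = (\<lambda>y::real^'n. norm y powr (-a))"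
  have w0: "w y \<ge> 0" for y by (simp add: w_def)
  define K where "K = (\<lambda>q. P q * hk q)"
  have intK: "integrable lborel (\<lambda>y. K (x - y, t) * w y)" if "t > 0" for x t
    using kernel_integrable[OF P that a, of x] by (simp add: K_def w_def)
  have intD: "integrable lborel (\<lambda>y. D (x - y, t) v * w y)" if "t > 0" for x t v
  proof -
    obtain P' where P': "P' \<in> polys" "\<forall>q. snd q > 0 \<longrightarrow> D q v = P' q * hk q" using DP by blast
    have "integrable lborel (\<lambda>y. P' (x - y, t) * hk (x - y, t) * w y)"
      using kernel_integrable[OF P'(1) that a, of x] by (simp add: w_def)
    moreover have "(\<lambda>y. P' (x - y, t) * hk (x - y, t) * w y) = (\<lambda>y. D (x - y, t) v * w y)"
      using P'(2) that by auto
    ultimately show ?thesis by simp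
  qed
  have linD: "linear (D q)" if "snd q > 0" for q
    using D that has_derivative_linear by blast
  define L where "L = (\<lambda>v. U a (\<lambda>q. D q v) p0)"
  have Lint: "L v = (\<integral>y. D (x0 - y, t0) v * w y \<partial>lborel)" for v
    by (simp add: L_def U_def p0 w_def)
  have linL: "linear L"
  proof (rule linearI)
    fix u v :: "(real^'n) \<times> real"
    have "L (u + v) = (\<integral>y. D (x0 - y, t0) u * w y + D (x0 - y, t0) v * w y \<partial>lborel)" unfolding Lint
      by (intro Bochner_Integration.integral_cong refl) (simp add: linear_add[OF linD] t0pos distrib_right)
    also have "\<dots> = L u + L v" unfolding Lint
      by (rule Bochner_Integration.integral_add[OF intD intD]) (use t0pos in auto)
    finally show "L (u + v) = L u + L v" .
  next
    fix c :: real and v :: "(real^'n) \<times> real"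
    have "L (c *\<^sub>R v) = (\<integral>y. c * (D (x0 - y, t0) v * w y) \<partial>lborel)" unfolding Lint
      by (intro Bochner_Integration.integral_cong refl) (simp add: linear_scale[OF linD] t0pos)
    also have "\<dots> = c *\<^sub>R L v" unfolding Lint by simp
    finally show "L (c *\<^sub>R v) = c *\<^sub>R L v" .
  qed
  have blL: "bounded_linear L" using linL by (simp add: linear_conv_bounded_linear)
  have ex1: "\<forall>j. \<exists>P1. P1 \<in> polys \<and> (\<forall>q. snd q > 0 \<longrightarrow> D q j = P1 q * hk q)" using DP by blast
  obtain P1 where P1: "\<And>j. P1 j \<in> polys" "\<And>j q. snd q > 0 \<Longrightarrow> D q j = P1 j q * hk q"
    using choice[OF ex1] by blast
  have ex2: "\<forall>j. \<exists>D1. (\<forall>q. snd q > 0 \<longrightarrow> ((\<lambda>q. P1 j q * hk q) has_derivative D1 q) (at q)) \<and>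
             (\<forall>v. \<exists>P'\<in>polys. \<forall>q. snd q > 0 \<longrightarrow> D1 q v = P' q * hk q)"
    using kernel_deriv[OF P1(1)] by blast
  obtain D1 where D1: "\<And>j q. snd q > 0 \<Longrightarrow> ((\<lambda>q. P1 j q * hk q) has_derivative D1 j q) (at q)"
    and D1P: "\<And>j v. \<exists>P'\<in>polys. \<forall>q. snd q > 0 \<longrightarrow> D1 j q v = P' q * hk q"
    using choice[OF ex2] by blast
  have ex3: "\<forall>jl. \<exists>P2. P2 \<in> polys \<and> (\<forall>q. snd q > 0 \<longrightarrow> D1 (fst jl) q (snd jl) = P2 q * hk q)"
    using D1P by blast
  obtain P2 where P2: "\<And>jl. P2 jl \<in> polys" "\<And>jl q. snd q > 0 \<Longrightarrow> D1 (fst jl) q (snd jl) = P2 jl q * hk q"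
    using choice[OF ex3] by blast
  have ex4: "\<forall>jl. \<exists>C. C \<ge> 0 \<and> (\<forall>x t y. norm (x - x0) \<le> 1 \<and> t0/2 \<le> t \<and> t \<le> 3*t0/2 \<longrightarrow>
     \<bar>P2 jl (x - y, t) * hk (x - y, t)\<bar> \<le> C * exp (- (1 / (24 * t0)) * norm y ^ 2))"
    using kernel_dom[OF P2(1) t0pos] by blast
  obtain C where C: "\<And>jl. C jl \<ge> 0" "\<And>jl x t y. norm (x - x0) \<le> 1 \<Longrightarrow> t0/2 \<le> t \<Longrightarrow> t \<le> 3*t0/2 \<Longrightarrow>
     \<bar>P2 jl (x - y, t) * hk (x - y, t)\<bar> \<le> C jl * exp (- (1 / (24 * t0)) * norm y ^ 2)"
    using choice[OF ex4] by blast
  define Cs where "Cs = (\<Sum>j\<in>(Basis::((real^'n) \<times> real) set). \<Sum>l\<in>Basis. C (j, l))"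
  have Cs0: "Cs \<ge> 0" unfolding Cs_def using C(1) by (intro sum_nonneg) auto
  define E where "E = (\<lambda>y::real^'n. exp (- (1 / (24 * t0)) * norm y ^ 2))"
  have rem: "\<bar>K ((x0 - y) + fst h, t0 + snd h) - K (x0 - y, t0) - D (x0 - y, t0) h\<bar> \<le> norm h ^ 2 * (Cs * E y)"
    if hd: "norm h < \<delta>" for h y
  proof -
    define q where "q = (x0 - y, t0)"
    have nh: "norm (fst h) \<le> norm h" "\<bar>snd h\<bar> \<le> norm h"
    proof -
      have e: "norm h = sqrt ((norm (fst h))\<^sup>2 + (norm (snd h))\<^sup>2)" by (metis norm_Pair prod.collapse)
      show "norm (fst h) \<le> norm h" unfolding e by (rule real_sqrt_sum_squares_ge1)
      show "\<bar>snd h\<bar> \<le> norm h" unfolding e using real_sqrt_sum_squares_ge2[of "norm (snd h)" "norm (fst h)"] by simp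
    qed
    have sh: "\<bar>s * snd h\<bar> \<le> t0/2" "norm (s *\<^sub>R fst h) \<le> 1" if "0 \<le> s" "s \<le> 1" for s
    proof -
      have "\<bar>s * snd h\<bar> \<le> 1 * \<bar>snd h\<bar>" using that unfolding abs_mult by (intro mult_right_mono) auto
      thus "\<bar>s * snd h\<bar> \<le> t0/2" using nh hd \<delta> by linarith
      have "norm (s *\<^sub>R fst h) \<le> 1 * norm (fst h)" using that by (simp add: mult_left_le_one_le)
      thus "norm (s *\<^sub>R fst h) \<le> 1" using nh hd \<delta> by linarith
    qed
    have qs: "q + s *\<^sub>R h = ((x0 + s *\<^sub>R fst h) - y, t0 + s * snd h)" for s
      by (cases h) (simp add: q_def algebra_simps)
    have pos: "snd (q + s *\<^sub>R h) > 0" "t0/2 \<le> snd (q + s *\<^sub>R h)" "snd (q + s *\<^sub>R h) \<le> 3*t0/2"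
      "norm ((x0 + s *\<^sub>R fst h) - x0) \<le> 1" if "0 \<le> s" "s \<le> 1" for s
      using sh[OF that] t0pos unfolding qs by (auto simp: abs_le_iff)
    define g where "g = (\<lambda>s. K (q + s *\<^sub>R h))"
    define g1 where "g1 = (\<lambda>s. \<Sum>j\<in>Basis. (h \<bullet> j) * (P1 j (q + s *\<^sub>R h) * hk (q + s *\<^sub>R h)))"
    define g2 where "g2 = (\<lambda>s. \<Sum>j\<in>Basis. (h \<bullet> j) * D1 j (q + s *\<^sub>R h) h)"
    have Dexp: "D q' h = (\<Sum>j\<in>Basis. (h \<bullet> j) * (P1 j q' * hk q'))" if "snd q' > 0" for q'
      using linear_expand[OF linD[OF that], of h] P1(2)[OF that] by simp
    have dg: "DERIV g s :> g1 s" if "0 \<le> s" "s \<le> 1" for s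
    proof -
      have "DERIV g s :> D (q + s *\<^sub>R h) h"
        unfolding g_def K_def by (rule deriv_along[where DF="D (q + s *\<^sub>R h)"], rule D[rule_format, OF pos(1)[OF that]])
      thus ?thesis using Dexp[OF pos(1)[OF that]] by (simp add: g1_def)
    qed
    have dg1: "DERIV g1 s :> g2 s" if "0 \<le> s" "s \<le> 1" for s
      unfolding g1_def g2_def
      by (intro DERIV_sum DERIV_cmult deriv_along D1 pos(1)[OF that])
    obtain \<xi> where \<xi>: "0 < \<xi>" "\<xi> < 1" "g 1 - g 0 = (1 - 0) * g1 \<xi>"
      using MVT2[of 0 1 g g1] dg by auto
    obtain \<eta> where \<eta>: "0 < \<eta>" "\<eta> < \<xi>" "g1 \<xi> - g1 0 = (\<xi> - 0) * g2 \<eta>"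
      using MVT2[of 0 \<xi> g1 g2] dg1 \<xi> by auto
    have g10: "g1 0 = D q h" using Dexp[of q] t0pos by (simp add: g1_def q_def)
    have gl: "g 1 = K ((x0 - y) + fst h, t0 + snd h)" "g 0 = K (x0 - y, t0)"
      by (cases h, simp_all add: g_def q_def)
    have "K ((x0 - y) + fst h, t0 + snd h) - K (x0 - y, t0) - D (x0 - y, t0) h = \<xi> * g2 \<eta>"
      using \<xi>(3) \<eta>(3) g10 gl by (simp add: q_def)
    hence "\<bar>K ((x0 - y) + fst h, t0 + snd h) - K (x0 - y, t0) - D (x0 - y, t0) h\<bar> \<le> \<bar>g2 \<eta>\<bar>"
      using \<xi> \<eta> by (simp add: abs_mult mult_left_le_one_le)
    also have "\<bar>g2 \<eta>\<bar> \<le> norm h ^ 2 * (Cs * E y)"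
    proof -
      define q' where "q' = q + \<eta> *\<^sub>R h"
      have e01: "0 \<le> \<eta>" "\<eta> \<le> 1" using \<eta> \<xi> by auto
      have q'pos: "snd q' > 0" using pos(1)[OF e01] by (simp add: q'_def)
      have lin1: "linear (D1 j q')" for j using D1[OF q'pos] has_derivative_linear by blast
      have X: "\<bar>P2 (j,l) q' * hk q'\<bar> \<le> C (j,l) * E y" for j l
        using C(2)[OF pos(4)[OF e01] pos(2)[OF e01] pos(3)[OF e01], of "(j,l)" y]
        unfolding q'_def qs E_def by simp
      have "\<bar>g2 \<eta>\<bar> = \<bar>\<Sum>j\<in>Basis. (h \<bullet> j) * (\<Sum>l\<in>Basis. (h \<bullet> l) * (P2 (j,l) q' * hk q'))\<bar>"
      proof -
        have "D1 j q' h = (\<Sum>l\<in>Basis. (h \<bullet> l) * (P2 (j,l) q' * hk q'))" for j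
          using linear_expand[OF lin1, of j h] P2(2)[OF q'pos, of "(j, _)"] by simp
        thus ?thesis by (simp add: g2_def q'_def)
      qed
      also have "\<dots> \<le> (\<Sum>j\<in>(Basis::((real^'n) \<times> real) set). norm h * (\<Sum>l\<in>Basis. norm h * (C (j,l) * E y)))"
      proof -
        have "\<bar>\<Sum>j\<in>Basis. (h \<bullet> j) * (\<Sum>l\<in>Basis. (h \<bullet> l) * (P2 (j,l) q' * hk q'))\<bar>
           \<le> (\<Sum>j\<in>Basis. \<bar>(h \<bullet> j) * (\<Sum>l\<in>Basis. (h \<bullet> l) * (P2 (j,l) q' * hk q'))\<bar>)"
          by (rule sum_abs)
        also have "\<dots> \<le> (\<Sum>j\<in>(Basis::((real^'n) \<times> real) set). norm h * (\<Sum>l\<in>Basis. norm h * (C (j,l) * E y)))"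
        proof (rule sum_mono)
          fix j :: "(real^'n) \<times> real" assume j: "j \<in> Basis"
          have "\<bar>\<Sum>l\<in>Basis. (h \<bullet> l) * (P2 (j,l) q' * hk q')\<bar> \<le> (\<Sum>l\<in>Basis. \<bar>(h \<bullet> l) * (P2 (j,l) q' * hk q')\<bar>)"
            by (rule sum_abs)
          also have "\<dots> \<le> (\<Sum>l\<in>(Basis::((real^'n) \<times> real) set). norm h * (C (j,l) * E y))"
          proof (rule sum_mono)
            fix l :: "(real^'n) \<times> real" assume l: "l \<in> Basis"
            show "\<bar>(h \<bullet> l) * (P2 (j,l) q' * hk q')\<bar> \<le> norm h * (C (j,l) * E y)"
            proof -
              have "\<bar>(h \<bullet> l) * (P2 (j,l) q' * hk q')\<bar> = \<bar>h \<bullet> l\<bar> * \<bar>P2 (j,l) q' * hk q'\<bar>" by (rule abs_mult)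
              also have "\<dots> \<le> norm h * (C (j,l) * E y)" using Basis_le_norm[OF l, of h] X[of j l]
                by (intro mult_mono) auto
              finally show ?thesis .
            qed
          qed
          finally have "\<bar>\<Sum>l\<in>Basis. (h \<bullet> l) * (P2 (j,l) q' * hk q')\<bar> \<le> (\<Sum>l\<in>(Basis::((real^'n) \<times> real) set). norm h * (C (j,l) * E y))" .
          thus "\<bar>(h \<bullet> j) * (\<Sum>l\<in>Basis. (h \<bullet> l) * (P2 (j,l) q' * hk q'))\<bar> \<le> norm h * (\<Sum>l\<in>Basis. norm h * (C (j,l) * E y))"
          proof -
            have "\<bar>(h \<bullet> j) * (\<Sum>l\<in>Basis. (h \<bullet> l) * (P2 (j,l) q' * hk q'))\<bar> = \<bar>h \<bullet> j\<bar> * \<bar>\<Sum>l\<in>Basis. (h \<bullet> l) * (P2 (j,l) q' * hk q')\<bar>" by (rule abs_mult)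
            also have "\<dots> \<le> norm h * (\<Sum>l\<in>Basis. norm h * (C (j,l) * E y))"
              using Basis_le_norm[OF j, of h] \<open>\<bar>\<Sum>l\<in>Basis. (h \<bullet> l) * (P2 (j,l) q' * hk q')\<bar> \<le> (\<Sum>l\<in>(Basis::((real^'n) \<times> real) set). norm h * (C (j,l) * E y))\<close>
              by (intro mult_mono) auto
            finally show ?thesis .
          qed
        qed
        finally show ?thesis .
      qed
      also have "\<dots> = norm h ^ 2 * (Cs * E y)"
        by (simp add: Cs_def power2_eq_square sum_distrib_left sum_distrib_right mult.assoc mult.left_commute)
      finally show ?thesis .
    qed
    finally show ?thesis .
  qed
  have intE: "integrable lborel (\<lambda>y. E y * w y)"
    using gauss_weight_integrable[of "1/(24*t0)" a] t0pos a by (simp add: E_def w_def)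
  define IE where "IE = (\<integral>y. E y * w y \<partial>lborel)"
  have IE0: "IE \<ge> 0" unfolding IE_def using w0 by (intro Bochner_Integration.integral_nonneg) (simp add: E_def)
  define M where "M = Cs * IE"
  have M0: "M \<ge> 0" using Cs0 IE0 by (simp add: M_def)
  have bnd: "\<bar>U a K (p0 + h) - U a K p0 - L h\<bar> \<le> norm h ^ 2 * M" if hd: "norm h < \<delta>" for h
  proof -
    have "\<bar>snd h\<bar> \<le> norm h"
    proof -
      have e: "norm h = sqrt ((norm (fst h))\<^sup>2 + (norm (snd h))\<^sup>2)" by (metis norm_Pair prod.collapse)
      show ?thesis unfolding e using real_sqrt_sum_squares_ge2[of "norm (snd h)" "norm (fst h)"] by simp
    qed
    hence tpos: "t0 + snd h > 0" using hd \<delta> t0pos by linarith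
    have e1: "U a K (p0 + h) = (\<integral>y. K ((x0 - y) + fst h, t0 + snd h) * w y \<partial>lborel)"
      unfolding U_def w_def p0 by (intro Bochner_Integration.integral_cong refl) (simp add: algebra_simps)
    have e2: "U a K p0 = (\<integral>y. K (x0 - y, t0) * w y \<partial>lborel)"
      unfolding U_def w_def p0 by simp
    have i1: "integrable lborel (\<lambda>y. K ((x0 - y) + fst h, t0 + snd h) * w y)"
    proof -
      have "integrable lborel (\<lambda>y. K ((x0 + fst h) - y, t0 + snd h) * w y)" by (rule intK[OF tpos])
      moreover have "(\<lambda>y. K ((x0 + fst h) - y, t0 + snd h) * w y) = (\<lambda>y. K ((x0 - y) + fst h, t0 + snd h) * w y)"
        by (simp add: algebra_simps)
      ultimately show ?thesis by simp
    qed
    have i2: "integrable lborel (\<lambda>y. K (x0 - y, t0) * w y)" by (rule intK[OF t0pos])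
    have i3: "integrable lborel (\<lambda>y. D (x0 - y, t0) h * w y)" by (rule intD[OF t0pos])
    have "U a K (p0 + h) - U a K p0 - L h = (\<integral>y. K ((x0 - y) + fst h, t0 + snd h) * w y - K (x0 - y, t0) * w y - D (x0 - y, t0) h * w y \<partial>lborel)"
      unfolding e1 e2 Lint
      by (subst Bochner_Integration.integral_diff[OF Bochner_Integration.integrable_diff[OF i1 i2] i3],
          subst Bochner_Integration.integral_diff[OF i1 i2]) simp
    also have "\<dots> = (\<integral>y. (K ((x0 - y) + fst h, t0 + snd h) - K (x0 - y, t0) - D (x0 - y, t0) h) * w y \<partial>lborel)"
      by (simp add: algebra_simps)
    finally have eq: "U a K (p0 + h) - U a K p0 - L h = (\<integral>y. (K ((x0 - y) + fst h, t0 + snd h) - K (x0 - y, t0) - D (x0 - y, t0) h) * w y \<partial>lborel)" .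
    have iF: "integrable lborel (\<lambda>y. (K ((x0 - y) + fst h, t0 + snd h) - K (x0 - y, t0) - D (x0 - y, t0) h) * w y)"
    proof -
      have "integrable lborel (\<lambda>y. K ((x0 - y) + fst h, t0 + snd h) * w y - K (x0 - y, t0) * w y - D (x0 - y, t0) h * w y)"
        using i1 i2 i3 by auto
      thus ?thesis by (simp add: algebra_simps)
    qed
    have "\<bar>U a K (p0 + h) - U a K p0 - L h\<bar> \<le> (\<integral>y. \<bar>(K ((x0 - y) + fst h, t0 + snd h) - K (x0 - y, t0) - D (x0 - y, t0) h) * w y\<bar> \<partial>lborel)"
      unfolding eq using integral_norm_bound[of lborel "\<lambda>y. (K ((x0 - y) + fst h, t0 + snd h) - K (x0 - y, t0) - D (x0 - y, t0) h) * w y"]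
      by simp
    also have "\<dots> \<le> (\<integral>y. norm h ^ 2 * Cs * (E y * w y) \<partial>lborel)"
    proof (rule integral_mono)
      show "integrable lborel (\<lambda>y. \<bar>(K ((x0 - y) + fst h, t0 + snd h) - K (x0 - y, t0) - D (x0 - y, t0) h) * w y\<bar>)"
        using iF by auto
      show "integrable lborel (\<lambda>y. norm h ^ 2 * Cs * (E y * w y))" using intE by auto
      fix y
      have "\<bar>(K ((x0 - y) + fst h, t0 + snd h) - K (x0 - y, t0) - D (x0 - y, t0) h) * w y\<bar>
          = \<bar>K ((x0 - y) + fst h, t0 + snd h) - K (x0 - y, t0) - D (x0 - y, t0) h\<bar> * w y"
        using w0[of y] by (simp add: abs_mult)
      also have "\<dots> \<le> (norm h ^ 2 * (Cs * E y)) * w y"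
        using rem[OF hd, of y] w0[of y] by (intro mult_right_mono) auto
      finally show "\<bar>(K ((x0 - y) + fst h, t0 + snd h) - K (x0 - y, t0) - D (x0 - y, t0) h) * w y\<bar> \<le> norm h ^ 2 * Cs * (E y * w y)"
        by (simp add: mult.assoc)
    qed
    also have "\<dots> = norm h ^ 2 * M" by (simp add: M_def IE_def)
    finally show ?thesis .
  qed
  have "(U a K has_derivative L) (at p0)"
    unfolding has_derivative_at_alt
  proof (intro conjI blL allI impI)
    fix e :: real assume e: "e > 0"
    define d where "d = min \<delta> (e / (M + 1))"
    have d: "d > 0" using \<delta> e M0 by (simp add: d_def)
    show "\<exists>d>0. \<forall>y. norm (y - p0) < d \<longrightarrow> norm (U a K y - U a K p0 - L (y - p0)) \<le> e * norm (y - p0)"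
    proof (intro exI[of _ d] conjI d allI impI)
      fix y assume y: "norm (y - p0) < d"
      define h where "h = y - p0"
      have yh: "y = p0 + h" by (simp add: h_def)
      have hd: "norm h < \<delta>" using y by (simp add: h_def d_def)
      have he: "norm h * (M + 1) \<le> e" using y M0 by (simp add: h_def d_def field_simps)
      have "norm (U a K y - U a K p0 - L (y - p0)) \<le> norm h ^ 2 * M"
        using bnd[OF hd] by (simp add: yh)
      also have "\<dots> = norm h * (norm h * M)" by (simp add: power2_eq_square)
      also have "\<dots> \<le> norm h * e"
      proof (intro mult_left_mono)
        have "norm h * M \<le> norm h * (M + 1)" by (simp add: mult_left_mono)
        thus "norm h * M \<le> e" using he by linarith
      qed simp
      finally show "norm (U a K y - U a K p0 - L (y - p0)) \<le> e * norm (y - p0)"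
        by (simp add: h_def mult.commute)
    qed
  qed
  thus ?thesis by (simp add: K_def L_def)
qed

lemma U_cong:
  assumes "snd p > 0" "\<And>q. snd q > 0 \<Longrightarrow> K1 q = K2 q"
  shows "U a K1 p = U a K2 p"
  unfolding U_def using assms by (intro Bochner_Integration.integral_cong) auto

lemma iter_U:
  fixes a :: real assumes a: "0 \<le> a" "a < CARD('n)"
  shows "\<exists>P\<in>polys. \<forall>p::(real^'n)\<times>real. snd p > 0 \<longrightarrow> iter_dderiv (U a hk) vs p = U a (\<lambda>q. P q * hk q) p"
proof (induction vs)
  case Nil
  show ?case by (rule bexI[of _ "\<lambda>q. 1"]) (auto intro: pc)
next
  case (Cons v vs)
  then obtain P where P: "P \<in> polys" "\<forall>p::(real^'n)\<times>real. snd p > 0 \<longrightarrow> iter_dderiv (U a hk) vs p = U a (\<lambda>q. P q * hk q) p"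
    by blast
  obtain D where D: "\<forall>q. snd q > 0 \<longrightarrow> ((\<lambda>q. P q * hk q) has_derivative D q) (at q)"
    and DP: "\<forall>v. \<exists>P'\<in>polys. \<forall>q. snd q > 0 \<longrightarrow> D q v = P' q * hk q"
    using kernel_deriv[OF P(1)] by blast
  obtain P' where P': "P' \<in> polys" "\<forall>q. snd q > 0 \<longrightarrow> D q v = P' q * hk q" using DP by blast
  show ?case
  proof (rule bexI[OF _ P'(1)], intro allI impI)
    fix p :: "(real^'n)\<times>real" assume p: "snd p > 0"
    have "(U a (\<lambda>q. P q * hk q) has_derivative (\<lambda>v. U a (\<lambda>q. D q v) p)) (at p)"
      by (rule U_has_derivative[OF P(1) a p D DP])
    hence "(iter_dderiv (U a hk) vs has_derivative (\<lambda>v. U a (\<lambda>q. D q v) p)) (at p)"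
      by (rule has_derivative_transform_within_open[OF _ open_tpos]) (use p P(2) in auto)
    hence "frechet_derivative (iter_dderiv (U a hk) vs) (at p) = (\<lambda>v. U a (\<lambda>q. D q v) p)"
      by (simp add: frechet_derivative_at[symmetric])
    hence "iter_dderiv (U a hk) (v # vs) p = U a (\<lambda>q. D q v) p" by simp
    also have "\<dots> = U a (\<lambda>q. P' q * hk q) p" using P'(2) p by (intro U_cong) auto
    finally show "iter_dderiv (U a hk) (v # vs) p = U a (\<lambda>q. P' q * hk q) p" .
  qed
qed

lemma smooth_U:
  fixes a :: real assumes a: "0 \<le> a" "a < CARD('n)"
  shows "smooth_on (UNIV \<times> {0<..}) (U a (hk :: (real^'n) \<times> real \<Rightarrow> real))"
  unfolding smooth_on_def
proof (intro allI ballI)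
  fix vs and p :: "(real^'n) \<times> real" assume "p \<in> UNIV \<times> {0<..}"
  hence p: "snd p > 0" by auto
  obtain P where P: "P \<in> polys" "\<forall>p::(real^'n)\<times>real. snd p > 0 \<longrightarrow> iter_dderiv (U a hk) vs p = U a (\<lambda>q. P q * hk q) p"
    using iter_U[OF a] by blast
  obtain D where D: "\<forall>q. snd q > 0 \<longrightarrow> ((\<lambda>q. P q * hk q) has_derivative D q) (at q)"
    and DP: "\<forall>v. \<exists>P'\<in>polys. \<forall>q. snd q > 0 \<longrightarrow> D q v = P' q * hk q"
    using kernel_deriv[OF P(1)] by blast
  have "(U a (\<lambda>q. P q * hk q) has_derivative (\<lambda>v. U a (\<lambda>q. D q v) p)) (at p)"
    by (rule U_has_derivative[OF P(1) a p D DP])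
  hence "(iter_dderiv (U a hk) vs has_derivative (\<lambda>v. U a (\<lambda>q. D q v) p)) (at p)"
    by (rule has_derivative_transform_within_open[OF _ open_tpos]) (use p P(2) in auto)
  thus "iter_dderiv (U a hk) vs differentiable (at p)" by (auto simp: differentiable_def)
qed

lemma U_sum:
  fixes a :: real and p :: "(real^'n) \<times> real"
  assumes I: "finite I" and Q: "\<And>i. i \<in> I \<Longrightarrow> Q i \<in> polys" and p: "snd p > 0" and a: "0 \<le> a" "a < CARD('n)"
  shows "(\<Sum>i\<in>I. U a (\<lambda>q. Q i q * hk q) p) = U a (\<lambda>q. \<Sum>i\<in>I. Q i q * hk q) p"
proof -
  have "(\<Sum>i\<in>I. U a (\<lambda>q. Q i q * hk q) p) = (\<integral>y. (\<Sum>i\<in>I. Q i (fst p - y, snd p) * hk (fst p - y, snd p) * norm y powr (-a)) \<partial>lborel)"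
    unfolding U_def
    by (rule Bochner_Integration.integral_sum[symmetric]) (rule kernel_integrable[OF Q p a])
  also have "\<dots> = U a (\<lambda>q. \<Sum>i\<in>I. Q i q * hk q) p"
    unfolding U_def by (simp add: sum_distrib_right)
  finally show ?thesis .
qed

lemma frechet_U_hk:
  fixes a :: real and p :: "(real^'n) \<times> real"
  assumes a: "0 \<le> a" "a < CARD('n)" and p: "snd p > 0"
  shows "(U a hk has_derivative (\<lambda>v. U a (\<lambda>q. hk q * hkR q v) p)) (at p)"
proof -
  have "(U a (\<lambda>q. (\<lambda>q. 1) q * hk q) has_derivative (\<lambda>v. U a (\<lambda>q. hk q * hkR q v) p)) (at p)"
  proof (rule U_has_derivative[OF pc a p])
    show "\<forall>q. snd q > 0 \<longrightarrow> ((\<lambda>q. 1 * hk q) has_derivative (\<lambda>v. hk q * hkR q v)) (at q)"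
      using hk_has_derivative by auto
    show "\<forall>v. \<exists>P'\<in>polys. \<forall>q. snd q > 0 \<longrightarrow> hk q * hkR q v = P' q * hk q"
      apply (intro allI)
      subgoal for v
      apply (rule bexI[OF _ hkR_polys[of v]])
      by (simp add: mult.commute)
      done
  qed
  thus ?thesis by simp
qed

definition Pk :: "'n \<Rightarrow> (real^'n) \<times> real \<Rightarrow> real" where
  "Pk i q = (-1/2) * fst q $ i * (1 / snd q)"

definition DPk :: "'n \<Rightarrow> (real^'n) \<times> real \<Rightarrow> (real^'n) \<times> real \<Rightarrow> real" where
  "DPk i q v = (-1/2) * fst v $ i * (1 / snd q) + (1/2) * snd v * fst q $ i * ((1 / snd q) * (1 / snd q))"

lemma Pk_has_derivative:
  fixes q :: "(real^'n) \<times> real"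
  assumes q: "snd q > 0"
  shows "((\<lambda>q. Pk i q * hk q) has_derivative (\<lambda>v. Pk i q * (hk q * hkR q v) + DPk i q v * hk q)) (at q)"
proof -
  have bl: "bounded_linear (\<lambda>v::(real^'n) \<times> real. fst v $ i)"
    using bounded_linear_compose[OF bounded_linear_vec_nth[of i] bounded_linear_fst] by (simp add: o_def)
  have c: "((\<lambda>q::(real^'n) \<times> real. fst q $ i) has_derivative (\<lambda>v. fst v $ i)) (at q)"
    by (rule bounded_linear_imp_has_derivative[OF bl])
  have inv: "((\<lambda>q::(real^'n) \<times> real. 1 / snd q) has_derivative (\<lambda>v. - snd v * ((1 / snd q) * (1 / snd q)))) (at q)"
    using q by (auto intro!: derivative_eq_intros simp: fun_eq_iff field_simps)
  have "((\<lambda>q. Pk i q) has_derivative DPk i q) (at q)"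
    unfolding Pk_def[abs_def]
    apply (rule has_derivative_eq_rhs[OF has_derivative_mult[OF has_derivative_mult[OF has_derivative_const c] inv]])
    by (simp add: DPk_def fun_eq_iff algebra_simps)
  thus ?thesis using hk_has_derivative[OF q] by (intro has_derivative_eq_rhs[OF has_derivative_mult]) auto
qed

lemma Pk_polys: "Pk i \<in> polys"
proof -
  have "Pk i = (\<lambda>q. ((-1/2) * fst q $ i) * (1 / snd q))" by (simp add: Pk_def[abs_def])
  also have "\<dots> \<in> polys" by (intro pmul pc pz pinv)
  finally show ?thesis .
qed

lemma DPk_polys: "(\<lambda>q. DPk i q v) \<in> polys"
proof -
  have "(\<lambda>q. DPk i q v) = (\<lambda>q. ((-1/2) * fst v $ i) * (1 / snd q) + ((1/2) * snd v * fst q $ i) * ((1 / snd q) * (1 / snd q)))"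
    by (simp add: DPk_def)
  also have "\<dots> \<in> polys" by (intro padd pmul pc pz pinv)
  finally show ?thesis .
qed

lemma hkR_axis: "hkR q (axis i 1, 0) = Pk i q"
  by (simp add: hkR_def Pk_def inner_axis)

lemma heat_U:
  fixes a :: real and p :: "(real^'n) \<times> real"
  assumes a: "0 \<le> a" "a < CARD('n)" and p: "snd p > 0"
  shows "heat_op (U a hk) p = 0"
proof -
  have fd: "frechet_derivative (U a hk) (at p') = (\<lambda>v. U a (\<lambda>q. hk q * hkR q v) p')" if "snd p' > 0" for p' :: "(real^'n) \<times> real"
    using frechet_U_hk[OF a that] by (simp add: frechet_derivative_at[symmetric])
  have t1: "iter_dderiv (U a hk) [(0, 1)] p = U a (\<lambda>q. hk q * hkR q (0, 1)) p"
    using fd[OF p] by simp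
  have t2: "iter_dderiv (U a hk) [(axis i 1, 0), (axis i 1, 0)] p = U a (\<lambda>q. Pk i q * (hk q * hkR q (axis i 1, 0)) + DPk i q (axis i 1, 0) * hk q) p" for i
  proof -
    have e1: "iter_dderiv (U a hk) [(axis i 1, 0)] p' = U a (\<lambda>q. Pk i q * hk q) p'" if "snd p' > 0" for p'
      using fd[OF that] by (simp add: hkR_axis mult.commute)
    have "(U a (\<lambda>q. Pk i q * hk q) has_derivative (\<lambda>v. U a (\<lambda>q. Pk i q * (hk q * hkR q v) + DPk i q v * hk q) p)) (at p)"
    proof (rule U_has_derivative[OF Pk_polys a p])
      show "\<forall>q. snd q > 0 \<longrightarrow> ((\<lambda>q. Pk i q * hk q) has_derivative (\<lambda>v. Pk i q * (hk q * hkR q v) + DPk i q v * hk q)) (at q)"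
        using Pk_has_derivative by blast
      show "\<forall>v. \<exists>P'\<in>polys. \<forall>q. snd q > 0 \<longrightarrow> Pk i q * (hk q * hkR q v) + DPk i q v * hk q = P' q * hk q"
      proof
        fix v
        show "\<exists>P'\<in>polys. \<forall>q. snd q > 0 \<longrightarrow> Pk i q * (hk q * hkR q v) + DPk i q v * hk q = P' q * hk q"
          by (rule bexI[of _ "\<lambda>q. Pk i q * hkR q v + DPk i q v"])
             (auto simp: algebra_simps intro!: padd pmul Pk_polys hkR_polys DPk_polys)
      qed
    qed
    hence "(iter_dderiv (U a hk) [(axis i 1, 0)] has_derivative (\<lambda>v. U a (\<lambda>q. Pk i q * (hk q * hkR q v) + DPk i q v * hk q) p)) (at p)"
      by (rule has_derivative_transform_within_open[OF _ open_tpos]) (use p e1 in auto)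
    hence "frechet_derivative (iter_dderiv (U a hk) [(axis i 1, 0)]) (at p) = (\<lambda>v. U a (\<lambda>q. Pk i q * (hk q * hkR q v) + DPk i q v * hk q) p)"
      by (simp add: frechet_derivative_at[symmetric])
    thus ?thesis by simp
  qed
  define Q :: "'n \<Rightarrow> (real^'n) \<times> real \<Rightarrow> real" where "Q = (\<lambda>i q. Pk i q * hkR q (axis i 1, 0) + DPk i q (axis i 1, 0))"
  have Qp: "Q i \<in> polys" for i unfolding Q_def by (intro padd pmul Pk_polys hkR_polys DPk_polys)
  have "(\<Sum>i\<in>UNIV. iter_dderiv (U a hk) [(axis i 1, 0), (axis i 1, 0)] p) = (\<Sum>i\<in>UNIV. U a (\<lambda>q. Q i q * hk q) p)"
    unfolding t2 Q_def by (simp add: algebra_simps)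
  also have "\<dots> = U a (\<lambda>q. \<Sum>i\<in>UNIV. Q i q * hk q) p"
    by (rule U_sum[OF finite Qp p a])
  also have "\<dots> = U a (\<lambda>q. hk q * hkR q (0, 1)) p"
  proof (rule U_cong[OF p])
    fix q :: "(real^'n) \<times> real" assume q: "snd q > 0"
    have "(\<Sum>i\<in>UNIV. Q i q * hk q) = hk q * ((\<Sum>i\<in>UNIV. fst q $ i * fst q $ i) / 4 * ((1 / snd q) * (1 / snd q)) - real CARD('n) / 2 * (1 / snd q))"
      unfolding Q_def using q
      by (simp add: hkR_axis Pk_def DPk_def sum_distrib_left sum_distrib_right sum_subtractf algebra_simps power2_eq_square sum_divide_distrib)
    also have "\<dots> = hk q * hkR q (0, 1)"
      by (simp add: hkR_def inner_vec_def algebra_simps)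
    finally show "(\<Sum>i\<in>UNIV. Q i q * hk q) = hk q * hkR q (0, 1)" .
  qed
  finally have "(\<Sum>i\<in>UNIV. iter_dderiv (U a hk) [(axis i 1, 0), (axis i 1, 0)] p) = iter_dderiv (U a hk) [(0, 1)] p"
    using t1 by simp
  thus ?thesis unfolding heat_op_def by simp
qed

lemma nn_integral_affine_eu:
  fixes f :: "'a::euclidean_space \<Rightarrow> ennreal" and c :: real
  assumes [measurable]: "f \<in> borel_measurable borel" and c: "c \<noteq> 0"
  shows "(\<integral>\<^sup>+x. f x \<partial>lborel) = ennreal (\<bar>c\<bar>^DIM('a)) * (\<integral>\<^sup>+x. f (t + c *\<^sub>R x) \<partial>lborel)"
  by (subst lborel_affine[OF c, of t]) (simp add: nn_integral_density nn_integral_distr nn_integral_cmult)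

lemma lborel_integrable_affine_eu:
  fixes f :: "'a::euclidean_space \<Rightarrow> 'b :: {banach, second_countable_topology}"
  assumes f: "integrable lborel f" and c: "c \<noteq> 0"
  shows "integrable lborel (\<lambda>x. f (t + c *\<^sub>R x))"
  using f f[THEN borel_measurable_integrable] unfolding integrable_iff_bounded
  by (subst (asm) nn_integral_affine_eu[where c=c and t=t]) (use c in \<open>auto simp: ennreal_mult_less_top\<close>)

lemma lborel_integrable_affine_eu_iff:
  fixes f :: "'a::euclidean_space \<Rightarrow> 'b :: {banach, second_countable_topology}"
  assumes c: "c \<noteq> 0"
  shows "integrable lborel (\<lambda>x. f (t + c *\<^sub>R x)) \<longleftrightarrow> integrable lborel f"
  using lborel_integrable_affine_eu[of f c t] lborel_integrable_affine_eu[of "\<lambda>x. f (t + c *\<^sub>R x)" "1/c" "-(1/c) *\<^sub>R t"] c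
  by (auto simp: algebra_simps)

lemma lborel_integral_affine_eu:
  fixes f :: "'a::euclidean_space \<Rightarrow> 'b :: {banach, second_countable_topology}" and c :: real
  assumes c: "c \<noteq> 0"
  shows "(\<integral>x. f x \<partial>lborel) = (\<bar>c\<bar>^DIM('a)) *\<^sub>R (\<integral>x. f (t + c *\<^sub>R x) \<partial>lborel)"
proof cases
  assume f[measurable]: "integrable lborel f" then show ?thesis
    using c f f[THEN borel_measurable_integrable] f[THEN lborel_integrable_affine_eu, of c t]
    by (subst lborel_affine[OF c, of t]) (simp add: integral_density integral_distr)
next
  assume "\<not> integrable lborel f" with c show ?thesis
    by (simp add: lborel_integrable_affine_eu_iff not_integrable_integral_eq)
qed


lemma hk_scale:
  fixes x z :: "real^'n"
  assumes t: "t > 0"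
  shows "hk (x - sqrt t *\<^sub>R z, t) = t powr (- real CARD('n) / 2) * hk (x /\<^sub>R sqrt t - z, 1)"
proof -
  have s: "sqrt t > 0" using t by simp
  have "x - sqrt t *\<^sub>R z = sqrt t *\<^sub>R (x /\<^sub>R sqrt t - z)" using s by (simp add: algebra_simps)
  hence n2: "norm (x - sqrt t *\<^sub>R z) ^ 2 = t * norm (x /\<^sub>R sqrt t - z) ^ 2"
    using t by (simp add: power_mult_distrib)
  have "hk (x - sqrt t *\<^sub>R z, t) = (4 * pi * t) powr (- real CARD('n) / 2) * exp (- (norm (x - sqrt t *\<^sub>R z) ^ 2) / (4 * t))"
    using t by (simp add: hk_def heat_kernel_def)
  also have "\<dots> = t powr (- real CARD('n) / 2) * ((4 * pi) powr (- real CARD('n) / 2) * exp (- (norm (x /\<^sub>R sqrt t - z) ^ 2) / 4))"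
    using t by (simp add: n2 powr_mult)
  also have "\<dots> = t powr (- real CARD('n) / 2) * hk (x /\<^sub>R sqrt t - z, 1)"
    by (simp add: hk_def heat_kernel_def)
  finally show ?thesis .
qed

lemma U_scale:
  fixes x :: "real^'n" and a :: real
  assumes t: "t > 0"
  shows "U a hk (x, t) = t powr (- a / 2) * U a hk (x /\<^sub>R sqrt t, 1)"
proof -
  have s: "sqrt t > 0" using t by simp
  have "U a hk (x, t) = (\<integral>y. hk (x - y, t) * norm y powr (-a) \<partial>lborel)" by (simp add: U_def)
  also have "\<dots> = (\<bar>sqrt t\<bar> ^ DIM(real^'n)) *\<^sub>R (\<integral>z. hk (x - (0 + sqrt t *\<^sub>R z), t) * norm (0 + sqrt t *\<^sub>R z) powr (-a) \<partial>lborel)"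
    by (rule lborel_integral_affine_eu) (use s in simp)
  also have "\<dots> = sqrt t ^ CARD('n) * (\<integral>z. (t powr (- real CARD('n) / 2) * sqrt t powr (-a)) * (hk (x /\<^sub>R sqrt t - z, 1) * norm z powr (-a)) \<partial>lborel)"
  proof -
    have "hk (x - (0 + sqrt t *\<^sub>R z), t) * norm (0 + sqrt t *\<^sub>R z) powr (-a)
        = (t powr (- real CARD('n) / 2) * sqrt t powr (-a)) * (hk (x /\<^sub>R sqrt t - z, 1) * norm z powr (-a))" for z
      using hk_scale[OF t, of x z] s by (simp add: powr_mult)
    thus ?thesis using s by simp
  qed
  also have "\<dots> = (sqrt t ^ CARD('n) * t powr (- real CARD('n) / 2)) * sqrt t powr (-a) * U a hk (x /\<^sub>R sqrt t, 1)"
    by (simp add: U_def)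
  also have "sqrt t ^ CARD('n) * t powr (- real CARD('n) / 2) = 1"
  proof -
    have "sqrt t ^ CARD('n) = t powr (real CARD('n) / 2)"
      using t by (simp add: powr_half_sqrt[symmetric] powr_realpow[symmetric] powr_powr)
    thus ?thesis using t by (simp add: powr_add[symmetric])
  qed
  also have "sqrt t powr (-a) = t powr (- a / 2)"
    using t by (simp add: powr_half_sqrt[symmetric] powr_powr)
  finally show ?thesis by simp
qed

lemma U_hk_integrable:
  fixes x :: "real^'n" and a :: real
  assumes t: "t > 0" and a: "0 \<le> a" "a < CARD('n)"
  shows "integrable lborel (\<lambda>y. hk (x - y, t) * norm y powr (-a))"
  using kernel_integrable[OF pc[of 1] t a, of x] by simp

lemma U_lower:
  fixes x :: "real^'n" and a :: real
  assumes t: "t > 0" and a: "0 \<le> a" "a < CARD('n)"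
  shows "U a hk (x, t) \<ge> (4 * pi * t) powr (- real CARD('n) / 2) * exp (- ((norm x + 1) ^ 2) / (4 * t)) * unit_ball_vol (real CARD('n))"
proof -
  define m where "m = (4 * pi * t) powr (- real CARD('n) / 2) * exp (- ((norm x + 1) ^ 2) / (4 * t))"
  have m0: "m \<ge> 0" by (simp add: m_def)
  have "m * unit_ball_vol (real CARD('n)) = (\<integral>y. m * indicator (cball (0::real^'n) 1) y \<partial>lborel)"
    using content_cball[of 1 "0::real^'n"] by simp
  also have "\<dots> \<le> (\<integral>y. hk (x - y, t) * norm y powr (-a) \<partial>lborel)"
  proof (rule integral_mono_AE)
    show "integrable lborel (\<lambda>y. m * indicator (cball (0::real^'n) 1) y)"
      by (intro integrable_mult_right integrable_real_indicator) (auto simp: emeasure_cball_n)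
    show "integrable lborel (\<lambda>y. hk (x - y, t) * norm y powr (-a))" by (rule U_hk_integrable[OF t a])
    show "AE y in lborel. m * indicator (cball (0::real^'n) 1) y \<le> hk (x - y, t) * norm y powr (-a)"
      using AE_lborel_singleton[of "0::real^'n"]
    proof eventually_elim
      case (elim y)
      show ?case
      proof (cases "y \<in> cball 0 1")
        case True
        have ny: "0 < norm y" "norm y \<le> 1" using True elim by auto
        have "norm (x - y) \<le> norm x + 1" using ny norm_triangle_ineq4[of x y] by linarith
        hence "norm (x - y) ^ 2 \<le> (norm x + 1) ^ 2" by (intro power_mono) auto
        hence "exp (- ((norm x + 1) ^ 2) / (4 * t)) \<le> exp (- (norm (x - y) ^ 2) / (4 * t))"
          using t by (simp add: divide_right_mono)
        hence hm: "m \<le> hk (x - y, t)" using t by (simp add: m_def hk_def heat_kernel_def)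
        have "1 \<le> norm y powr (-a)"
        proof -
          have "norm y powr a \<le> 1" using powr_mono2[of a "norm y" 1] ny a by simp
          moreover have "norm y powr a > 0" using ny by simp
          ultimately show ?thesis by (simp add: powr_minus_divide)
        qed
        hence "m * 1 \<le> hk (x - y, t) * norm y powr (-a)" using hm m0 by (intro mult_mono) auto
        thus ?thesis using True by simp
      next
        case False thus ?thesis using hk_nonneg[of "(x - y, t)"] by simp
      qed
    qed
  qed
  also have "\<dots> = U a hk (x, t)" by (simp add: U_def)
  finally show ?thesis by (simp add: m_def)
qed

lemma U_pos:
  fixes x :: "real^'n" and a :: real
  assumes t: "t > 0" and a: "0 \<le> a" "a < CARD('n)"
  shows "U a hk (x, t) > 0"
proof -
  have "0 < (4 * pi * t) powr (- real CARD('n) / 2) * exp (- ((norm x + 1) ^ 2) / (4 * t)) * unit_ball_vol (real CARD('n))"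
    using t by simp
  thus ?thesis using U_lower[OF t a, of x] by linarith
qed

lemma gauss_integrable:
  fixes s :: real assumes s: "0 < s"
  shows "integrable lborel (\<lambda>y::real^'n. exp (- s * norm y ^ 2))"
proof -
  have "integrable lborel (\<lambda>y::real^'n. exp (- s * norm y ^ 2) * norm y powr -0)"
    using gauss_weight_integrable[OF s, of 0] by simp
  moreover have "AE y in lborel. exp (- s * norm (y::real^'n) ^ 2) * norm y powr -0 = exp (- s * norm y ^ 2)"
    using AE_lborel_singleton[of "0::real^'n"] by eventually_elim simp
  ultimately show ?thesis
    by (subst integrable_cong_AE[symmetric]) (auto)
qed

lemma hk1_eq: "hk (z::real^'n, 1) = (4 * pi) powr (- real CARD('n) / 2) * exp (- (1/4) * norm z ^ 2)"
  by (simp add: hk_def heat_kernel_def)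

lemma hk1_integrable: "integrable lborel (\<lambda>z::real^'n. hk (z, 1))"
  unfolding hk1_eq by (intro integrable_mult_right gauss_integrable) simp

lemma hk1_shift_integrable: fixes x :: "real^'n" shows "integrable lborel (\<lambda>y::real^'n. hk (x - y, 1))"
  using lborel_integrable_affine_eu[OF hk1_integrable, of "-1" x] by simp

lemma hk1_shift_integral: fixes x :: "real^'n" shows "(\<integral>y. hk (x - y, 1) \<partial>lborel) = (\<integral>z. hk (z::real^'n, 1) \<partial>lborel)"
  using lborel_integral_affine_eu[of "-1" "\<lambda>z. hk (z::real^'n, 1)" x] by simp

lemma hk1_le: "hk (z::real^'n, 1) \<le> (4 * pi) powr (- real CARD('n) / 2)"
  unfolding hk1_eq by (simp add: mult_left_le)

lemma ball_weight_integrable: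
  fixes a :: real assumes a: "0 \<le> a" "a < CARD('n)"
  shows "integrable lborel (\<lambda>y::real^'n. indicator (cball 0 1) y * norm y powr (-a))"
proof (rule Bochner_Integration.integrable_bound)
  show "integrable lborel (\<lambda>y::real^'n. exp 1 * (exp (- 1 * norm y ^ 2) * norm y powr (-a)))"
    using gauss_weight_integrable[of 1 a] a by (intro integrable_mult_right) auto
  show "(\<lambda>y::real^'n. indicator (cball 0 1) y * norm y powr (-a)) \<in> borel_measurable lborel" by measurable
  show "AE y in lborel. norm (indicator (cball 0 1) y * norm (y::real^'n) powr (-a)) \<le> norm (exp 1 * (exp (- 1 * norm y ^ 2) * norm y powr (-a)))"
  proof (intro AE_I2)
    fix y :: "real^'n"
    show "norm (indicator (cball 0 1) y * norm (y::real^'n) powr (-a)) \<le> norm (exp 1 * (exp (- 1 * norm y ^ 2) * norm y powr (-a)))"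
    proof (cases "y \<in> cball 0 1")
      case True
      hence "norm y ^ 2 \<le> 1" by (simp add: power_le_one)
      hence "1 \<le> exp 1 * exp (- 1 * norm y ^ 2)" by (simp add: exp_add[symmetric])
      hence "1 * norm y powr (-a) \<le> (exp 1 * exp (- 1 * norm y ^ 2)) * norm y powr (-a)"
        by (intro mult_right_mono) auto
      thus ?thesis using True by (simp add: mult.assoc)
    qed simp
  qed
qed

lemma U_upper:
  fixes a :: real assumes a: "0 \<le> a" "a < CARD('n)"
  shows "\<exists>C0. \<forall>\<xi>::real^'n. U a hk (\<xi>, 1) \<le> C0"
proof -
  define A where "A = (4 * pi) powr (- real CARD('n) / 2)"
  define I1 where "I1 = (\<integral>y. indicator (cball (0::real^'n) 1) y * norm y powr (-a) \<partial>lborel)"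
  define G0 where "G0 = (\<integral>z. hk (z::real^'n, 1) \<partial>lborel)"
  show ?thesis
  proof (intro exI allI)
    fix \<xi> :: "real^'n"
    have "U a hk (\<xi>, 1) = (\<integral>y. hk (\<xi> - y, 1) * norm y powr (-a) \<partial>lborel)" by (simp add: U_def)
    also have "\<dots> \<le> (\<integral>y. A * (indicator (cball 0 1) y * norm y powr (-a)) + hk (\<xi> - y, 1) \<partial>lborel)"
    proof (rule integral_mono)
      show "integrable lborel (\<lambda>y. hk (\<xi> - y, 1) * norm y powr (-a))"
        by (rule U_hk_integrable[OF _ a]) simp
      show "integrable lborel (\<lambda>y. A * (indicator (cball 0 1) y * norm y powr (-a)) + hk (\<xi> - y, 1))"
        by (intro Bochner_Integration.integrable_add integrable_mult_right ball_weight_integrable[OF a] hk1_shift_integrable)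
      fix y :: "real^'n"
      show "hk (\<xi> - y, 1) * norm y powr (-a) \<le> A * (indicator (cball 0 1) y * norm y powr (-a)) + hk (\<xi> - y, 1)"
      proof (cases "y \<in> cball 0 1")
        case True
        have "hk (\<xi> - y, 1) * norm y powr (-a) \<le> A * norm y powr (-a)"
          using hk1_le[of "\<xi> - y"] by (intro mult_right_mono) (auto simp: A_def)
        thus ?thesis using True hk_nonneg[of "(\<xi> - y, 1)"] by simp
      next
        case False
        hence ny: "norm y > 1" by simp
        have "norm y powr (-a) \<le> 1"
        proof -
          have "1 \<le> norm y powr a" using ny a by (simp add: ge_one_powr_ge_zero)
          thus ?thesis using ny by (simp add: powr_minus_divide divide_le_eq_1)
        qed
        hence "hk (\<xi> - y, 1) * norm y powr (-a) \<le> hk (\<xi> - y, 1) * 1"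
          using hk_nonneg[of "(\<xi> - y, 1)"] by (intro mult_left_mono) auto
        thus ?thesis using False by simp
      qed
    qed
    also have "\<dots> = A * I1 + G0"
      by (subst Bochner_Integration.integral_add)
         (auto intro!: integrable_mult_right ball_weight_integrable[OF a] hk1_shift_integrable
               simp: I1_def G0_def hk1_shift_integral)
    finally show "U a hk (\<xi>, 1) \<le> A * I1 + G0" .
  qed
qed

lemma U_decay:
  fixes a :: real assumes a: "0 \<le> a" "a < CARD('n)"
  shows "\<exists>C1. \<forall>\<xi>::real^'n. \<xi> \<noteq> 0 \<longrightarrow> U a hk (\<xi>, 1) \<le> C1 * norm \<xi> powr (-a)"
proof -
  define A where "A = (4 * pi) powr (- real CARD('n) / 2)"
  have A0: "A \<ge> 0" by (simp add: A_def)
  define I1 where "I1 = (\<integral>y. indicator (cball (0::real^'n) 1) y * norm y powr (-a) \<partial>lborel)"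
  have I10: "I1 \<ge> 0" unfolding I1_def by (intro Bochner_Integration.integral_nonneg) auto
  define G0 where "G0 = (\<integral>z. hk (z::real^'n, 1) \<partial>lborel)"
  define V where "V = unit_ball_vol (real CARD('n))"
  have V0: "V \<ge> 0" by (simp add: V_def)
  define N :: nat where "N = nat \<lceil>a\<rceil>"
  define E where "E = exp ((real (CARD('n) + N))^2 / (4 * (1/16)))"
  show ?thesis
  proof (intro exI allI impI)
    fix \<xi> :: "real^'n" assume \<xi>: "\<xi> \<noteq> 0"
    define r where "r = norm \<xi>"
    have r: "r > 0" using \<xi> by (simp add: r_def)
    have fin: "emeasure lborel (cball (0::real^'n) (r/2)) < top" "emeasure lborel (cball (0::real^'n) 1) < top"
      using r by (simp_all add: emeasure_cball_n)
    have "U a hk (\<xi>, 1) = (\<integral>y. hk (\<xi> - y, 1) * norm y powr (-a) \<partial>lborel)" by (simp add: U_def)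
    also have "\<dots> \<le> (\<integral>y. 2 powr a * r powr (-a) * hk (\<xi> - y, 1) + A * exp (- (r^2) / 16) *
        (indicator (cball 0 1) y * norm y powr (-a) + indicator (cball (0::real^'n) (r/2)) y) \<partial>lborel)"
    proof (rule integral_mono)
      show "integrable lborel (\<lambda>y. hk (\<xi> - y, 1) * norm y powr (-a))"
        by (rule U_hk_integrable[OF _ a]) simp
      show "integrable lborel (\<lambda>y. 2 powr a * r powr (-a) * hk (\<xi> - y, 1) + A * exp (- (r^2) / 16) *
        (indicator (cball 0 1) y * norm y powr (-a) + indicator (cball (0::real^'n) (r/2)) y))"
        by (intro Bochner_Integration.integrable_add integrable_mult_right ball_weight_integrable[OF a]
             hk1_shift_integrable integrable_real_indicator) (auto simp: fin)
      fix y :: "real^'n"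
      have hk0: "hk (\<xi> - y, 1) \<ge> 0" by (rule hk_nonneg)
      have ex0: "A * exp (- (r^2) / 16) * (indicator (cball 0 1) y * norm y powr (-a) + indicator (cball (0::real^'n) (r/2)) y) \<ge> 0"
        using A0 by (intro mult_nonneg_nonneg add_nonneg_nonneg) auto
      show "hk (\<xi> - y, 1) * norm y powr (-a) \<le> 2 powr a * r powr (-a) * hk (\<xi> - y, 1) + A * exp (- (r^2) / 16) *
        (indicator (cball 0 1) y * norm y powr (-a) + indicator (cball (0::real^'n) (r/2)) y)"
      proof (cases "norm y \<ge> r/2")
        case True
        have "norm y powr (-a) \<le> (r/2) powr (-a)" using True r a by (intro powr_mono2') auto
        also have "\<dots> = 2 powr a * r powr (-a)" using r by (simp add: powr_divide powr_minus_divide)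
        finally have "hk (\<xi> - y, 1) * norm y powr (-a) \<le> hk (\<xi> - y, 1) * (2 powr a * r powr (-a))"
          using hk0 by (intro mult_left_mono) auto
        thus ?thesis using ex0 by (simp add: algebra_simps)
      next
        case False
        have "r/2 \<le> norm (\<xi> - y)" using False norm_triangle_ineq2[of \<xi> y] unfolding r_def by linarith
        hence "(r/2)^2 \<le> norm (\<xi> - y) ^ 2" using r by (intro power_mono) auto
        hence "exp (- (1/4) * norm (\<xi> - y) ^ 2) \<le> exp (- (r^2) / 16)" by (simp add: power_divide)
        hence hkb: "hk (\<xi> - y, 1) \<le> A * exp (- (r^2) / 16)" unfolding hk1_eq A_def by (intro mult_left_mono) auto
        have wb: "norm y powr (-a) \<le> indicator (cball 0 1) y * norm y powr (-a) + indicator (cball (0::real^'n) (r/2)) y"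
        proof (cases "norm y \<le> 1")
          case True thus ?thesis by simp
        next
          case False
          hence "norm y powr (-a) \<le> 1"
          proof -
            have "1 \<le> norm y powr a" using False a by (simp add: ge_one_powr_ge_zero)
            thus ?thesis using False by (simp add: powr_minus_divide divide_le_eq_1)
          qed
          moreover have "y \<in> cball 0 (r/2)" using \<open>\<not> r/2 \<le> norm y\<close> by simp
          ultimately show ?thesis using False by simp
        qed
        have "hk (\<xi> - y, 1) * norm y powr (-a) \<le> (A * exp (- (r^2) / 16)) *
          (indicator (cball 0 1) y * norm y powr (-a) + indicator (cball (0::real^'n) (r/2)) y)"
          using hkb wb hk0 by (intro mult_mono) auto
        moreover have "0 \<le> 2 powr a * r powr (-a) * hk (\<xi> - y, 1)" using hk0 by simp
        ultimately show ?thesis by linarith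
      qed
    qed
    also have "\<dots> = 2 powr a * r powr (-a) * G0 + A * exp (- (r^2) / 16) * (I1 + V * (r/2) ^ CARD('n))"
    proof -
      have m: "measure lborel (cball (0::real^'n) (r/2)) = V * (r/2) ^ CARD('n)"
        using content_cball[of "r/2" "0::real^'n"] r by (simp add: V_def)
      show ?thesis
        apply (subst Bochner_Integration.integral_add)
          apply (intro integrable_mult_right hk1_shift_integrable)
         apply (intro Bochner_Integration.integrable_add integrable_mult_right ball_weight_integrable[OF a]
             integrable_real_indicator; simp add: fin)
        apply (subst Bochner_Integration.integral_mult_right_zero)+
        apply (subst Bochner_Integration.integral_add)
          apply (rule ball_weight_integrable[OF a])
         apply (intro integrable_real_indicator; simp add: fin)
        using m by (simp add: hk1_shift_integral G0_def I1_def)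
    qed
    also have "\<dots> \<le> 2 powr a * r powr (-a) * G0 + A * ((I1 + V) * E) * r powr (-a)"
    proof -
      have "(I1 + V * (r/2) ^ CARD('n)) * r powr a * exp (- (r^2) / 16) \<le> (I1 + V) * E"
      proof -
        have p1: "(r/2) ^ CARD('n) \<le> (1 + r) ^ CARD('n)" using r by (intro power_mono) auto
        have p2: "1 \<le> (1 + r) ^ CARD('n)" using r by simp
        have "I1 + V * (r/2) ^ CARD('n) \<le> I1 * (1 + r) ^ CARD('n) + V * (1 + r) ^ CARD('n)"
          using I10 V0 p1 p2 by (intro add_mono mult_left_mono) (auto simp: mult_le_cancel_left1)
        hence q1: "I1 + V * (r/2) ^ CARD('n) \<le> (I1 + V) * (1 + r) ^ CARD('n)" by (simp add: algebra_simps)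
        have "r powr a \<le> (1 + r) powr a" using r a by (intro powr_mono2) auto
        also have "\<dots> \<le> (1 + r) powr real N" using r a by (intro powr_mono) (auto simp: N_def)
        also have "\<dots> = (1 + r) ^ N" using r by (simp add: powr_realpow)
        finally have q2: "r powr a \<le> (1 + r) ^ N" .
        have "(I1 + V * (r/2) ^ CARD('n)) * r powr a \<le> ((I1 + V) * (1 + r) ^ CARD('n)) * (1 + r) ^ N"
          using q1 q2 I10 V0 r by (intro mult_mono) auto
        also have "\<dots> = (I1 + V) * (1 + r) ^ (CARD('n) + N)" by (simp add: power_add)
        also have "\<dots> \<le> (I1 + V) * (E * exp ((1/16) * r^2))"
          using poly_le_exp[of r "1/16" "CARD('n) + N"] r I10 V0 unfolding E_def
          by (intro mult_left_mono) auto
        finally have "(I1 + V * (r/2) ^ CARD('n)) * r powr a \<le> (I1 + V) * (E * exp ((1/16) * r^2))" .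
        hence "(I1 + V * (r/2) ^ CARD('n)) * r powr a * exp (- (r^2) / 16) \<le> (I1 + V) * (E * exp ((1/16) * r^2)) * exp (- (r^2) / 16)"
          by (intro mult_right_mono) auto
        also have "\<dots> = (I1 + V) * E" by (simp add: mult.assoc exp_add[symmetric])
        finally show ?thesis .
      qed
      hence ineq: "(I1 + V * (r/2) ^ CARD('n)) * r powr a * exp (- (r^2) / 16) * r powr (-a) \<le> (I1 + V) * E * r powr (-a)"
        by (intro mult_right_mono) auto
      have one: "r powr a * r powr (-a) = 1" using r by (simp add: powr_add[symmetric])
      have "(I1 + V * (r/2) ^ CARD('n)) * exp (- (r^2) / 16) = (I1 + V * (r/2) ^ CARD('n)) * exp (- (r^2) / 16) * (r powr a * r powr (-a))"
        by (simp only: one mult_1_right)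
      also have "\<dots> = (I1 + V * (r/2) ^ CARD('n)) * r powr a * exp (- (r^2) / 16) * r powr (-a)"
        by (simp only: ac_simps)
      also have "\<dots> \<le> (I1 + V) * E * r powr (-a)" by (rule ineq)
      finally have "(I1 + V * (r/2) ^ CARD('n)) * exp (- (r^2) / 16) \<le> (I1 + V) * E * r powr (-a)" .
      hence "A * (exp (- (r^2) / 16) * (I1 + V * (r/2) ^ CARD('n))) \<le> A * ((I1 + V) * E * r powr (-a))"
        using A0 by (intro mult_left_mono) (auto simp: algebra_simps)
      thus ?thesis by (simp add: algebra_simps)
    qed
    also have "\<dots> = (2 powr a * G0 + A * ((I1 + V) * E)) * norm \<xi> powr (-a)"
      by (simp add: r_def algebra_simps)
    finally show "U a hk (\<xi>, 1) \<le> (2 powr a * G0 + A * ((I1 + V) * E)) * norm \<xi> powr (-a)" .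
  qed
qed

lemma U_nonneg: fixes a :: real shows "t > 0 \<Longrightarrow> 0 \<le> a \<Longrightarrow> a < CARD('n) \<Longrightarrow> U a hk (x::real^'n, t) \<ge> 0"
  using U_pos[of t a x] by simp

lemma U_continuous_on:
  fixes a :: real assumes a: "0 \<le> a" "a < CARD('n)"
  shows "continuous_on {p::(real^'n) \<times> real. snd p > 0} (U a hk)"
proof (rule has_derivative_continuous_on)
  fix p :: "(real^'n) \<times> real" assume "p \<in> {p. snd p > 0}"
  hence "(U a hk has_derivative (\<lambda>v. U a (\<lambda>q. hk q * hkR q v) p)) (at p)"
    using frechet_U_hk[OF a] by auto
  thus "(U a hk has_derivative (\<lambda>v. U a (\<lambda>q. hk q * hkR q v) p)) (at p within {p. snd p > 0})"
    by (rule has_derivative_at_withinI)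
qed

lemma U_pointwise_Llam:
  fixes a lam :: real
  assumes a: "0 < a" "a < CARD('n)" and lam: "0 < lam"
  shows "\<exists>K\<ge>0. \<forall>(x::real^'n) t. t > 0 \<longrightarrow> \<bar>U a hk (x, t)\<bar> powr lam \<le>
      K * (if norm x \<le> sqrt t then t powr (- (a * lam) / 2) else norm x powr (- (a * lam)))"
proof -
  have a0: "0 \<le> a" using a by simp
  obtain C0 where C0: "\<And>\<xi>::real^'n. U a hk (\<xi>, 1) \<le> C0" using U_upper[OF a0 a(2)] by blast
  obtain C1' where C1': "\<And>\<xi>::real^'n. \<xi> \<noteq> 0 \<Longrightarrow> U a hk (\<xi>, 1) \<le> C1' * norm \<xi> powr (-a)" using U_decay[OF a0 a(2)] by blast
  define C1 where "C1 = max C1' 0"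
  have C1: "U a hk (\<xi>, 1) \<le> C1 * norm \<xi> powr (-a)" if "\<xi> \<noteq> 0" for \<xi> :: "real^'n"
    using C1'[OF that] by (smt (verit, best) C1_def mult_right_mono powr_ge_zero)
  have C00: "C0 \<ge> 0" using C0[of 0] U_nonneg[of 1 a "0::real^'n"] a by simp
  define K where "K = max (C0 powr lam) (C1 powr lam)"
  show ?thesis
  proof (intro exI[of _ K] conjI allI impI)
    show "K \<ge> 0" by (simp add: K_def le_max_iff_disj)
    fix x :: "real^'n" and t :: real assume t: "t > 0"
    have sc: "U a hk (x, t) = t powr (- a / 2) * U a hk (x /\<^sub>R sqrt t, 1)" by (rule U_scale[OF t])
    have U0: "U a hk (x /\<^sub>R sqrt t, 1) \<ge> 0" using U_nonneg[of 1 a] a by simp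
    have Ut0: "U a hk (x, t) \<ge> 0" using U_nonneg[OF t a0 a(2)] by simp
    show "\<bar>U a hk (x, t)\<bar> powr lam \<le> K * (if norm x \<le> sqrt t then t powr (- (a * lam) / 2) else norm x powr (- (a * lam)))"
    proof (cases "norm x \<le> sqrt t")
      case True
      have "U a hk (x, t) \<le> t powr (- a / 2) * C0" unfolding sc using C0 by (intro mult_left_mono) auto
      hence "\<bar>U a hk (x, t)\<bar> powr lam \<le> (t powr (- a / 2) * C0) powr lam"
        using Ut0 lam by (intro powr_mono2) auto
      also have "\<dots> = C0 powr lam * t powr (- (a * lam) / 2)"
        using t C00 by (simp add: powr_mult powr_powr)
      also have "\<dots> \<le> K * t powr (- (a * lam) / 2)" by (intro mult_right_mono) (auto simp: K_def)
      finally show ?thesis using True by simp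
    next
      case False
      hence x0: "x \<noteq> 0" using t by auto
      have s: "sqrt t > 0" using t by simp
      have "U a hk (x, t) \<le> t powr (- a / 2) * (C1 * norm (x /\<^sub>R sqrt t) powr (-a))"
        unfolding sc using C1[of "x /\<^sub>R sqrt t"] x0 s by (intro mult_left_mono) auto
      also have "\<dots> = C1 * norm x powr (-a)"
      proof -
        have "norm (x /\<^sub>R sqrt t) powr (-a) = norm x powr (-a) * sqrt t powr a"
          using s by (simp add: powr_divide powr_minus_divide divide_simps)
        moreover have "sqrt t powr a = t powr (a/2)" using t by (simp add: powr_half_sqrt[symmetric] powr_powr)
        moreover have "t powr (- a / 2) * t powr (a/2) = 1" using t by (simp add: powr_add[symmetric])
        ultimately show ?thesis by (simp add: algebra_simps)
      qed
      finally have "\<bar>U a hk (x, t)\<bar> powr lam \<le> (C1 * norm x powr (-a)) powr lam"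
        using Ut0 lam by (intro powr_mono2) auto
      also have "\<dots> = C1 powr lam * norm x powr (- (a * lam))"
        by (simp add: powr_mult powr_powr C1_def)
      also have "\<dots> \<le> K * norm x powr (- (a * lam))" by (intro mult_right_mono) (auto simp: K_def)
      finally show ?thesis using False by simp
    qed
  qed
qed

lemma pair_sf_lborel: "pair_sigma_finite (lborel :: 'a::euclidean_space measure) (lborel :: 'b::euclidean_space measure)"
  by (simp add: pair_sigma_finite_def lborel.sigma_finite_measure_axioms)

lemma U_Llam:
  fixes a lam T :: real
  assumes a: "0 < a" "a < CARD('n)" and lam: "0 < lam" and b1: "CARD('n) < a * lam"
    and b2: "a * lam < CARD('n) + 2" and T: "T > 0"
  shows "set_integrable lborel (UNIV \<times> {0<..<T}) (\<lambda>p::(real^'n)\<times>real. \<bar>U a hk p\<bar> powr lam)"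
proof -
  have a0: "0 \<le> a" using a by simp
  define b where "b = a * lam"
  obtain K where K: "K \<ge> 0" "\<And>(x::real^'n) t. t > 0 \<Longrightarrow> \<bar>U a hk (x, t)\<bar> powr lam \<le>
      K * (if norm x \<le> sqrt t then t powr (- b / 2) else norm x powr (- b))"
    using U_pointwise_Llam[OF a lam] unfolding b_def by auto
  define S where "S = (UNIV \<times> {0<..<T} :: ((real^'n) \<times> real) set)"
  define F where "F = (\<lambda>p. indicator S p *\<^sub>R (\<bar>U a hk p\<bar> powr lam))"
  have Sopen: "open S" unfolding S_def by (intro open_Times) auto
  have contS: "continuous_on S (\<lambda>p. \<bar>U a hk p\<bar> powr lam)"
  proof -
    have S_sub: "S \<subseteq> {p. snd p > 0}" unfolding S_def by auto
    have cU: "continuous_on S (U a hk)" by (rule continuous_on_subset[OF U_continuous_on[OF a0 a(2)] S_sub])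
    have pos: "\<forall>p\<in>S. U a hk p > 0" using S_sub U_pos[OF _ a0 a(2)] by (auto simp: S_def)
    show ?thesis
    proof (intro continuous_on_powr' continuous_on_const)
      show "continuous_on S (\<lambda>p. \<bar>U a hk p\<bar>)" using cU by (intro continuous_intros)
    qed (use pos in auto)
  qed
  have Fm: "F \<in> borel_measurable borel"
    unfolding F_def by (rule borel_measurable_continuous_on_indicator[OF _ contS]) (use Sopen in auto)
  define g where "g = (\<lambda>\<xi>::real^'n. if norm \<xi> \<le> 1 then 1 else norm \<xi> powr (- b))"
  have J: "(\<integral>\<^sup>+\<xi>. ennreal (g \<xi>) \<partial>lborel) < \<infinity>"
  proof -
    have "(\<integral>\<^sup>+\<xi>. ennreal (g \<xi>) \<partial>lborel) \<le> (\<integral>\<^sup>+\<xi>. ennreal (if norm \<xi> \<le> 1 then norm \<xi> powr -0 else norm \<xi> powr -b) + ennreal (indicator (cball (0::real^'n) 1) \<xi>) \<partial>lborel)"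
    proof (intro nn_integral_mono)
      fix \<xi> :: "real^'n"
      show "ennreal (g \<xi>) \<le> ennreal (if norm \<xi> \<le> 1 then norm \<xi> powr -0 else norm \<xi> powr -b) + ennreal (indicator (cball (0::real^'n) 1) \<xi>)"
        by (cases "norm \<xi> \<le> 1") (auto simp: g_def)
    qed
    also have "\<dots> = (\<integral>\<^sup>+\<xi>. ennreal (if norm \<xi> \<le> 1 then norm (\<xi>::real^'n) powr -0 else norm \<xi> powr -b) \<partial>lborel) + (\<integral>\<^sup>+\<xi>. ennreal (indicator (cball (0::real^'n) 1) \<xi>) \<partial>lborel)"
      by (rule nn_integral_add) auto
    also have "\<dots> < \<infinity>"
    proof -
      have "(\<integral>\<^sup>+\<xi>. ennreal (if norm \<xi> \<le> 1 then norm (\<xi>::real^'n) powr -0 else norm \<xi> powr -b) \<partial>lborel) < \<infinity>"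
        using dyadic_integrable[of 0 b] b1 by (simp add: b_def)
      moreover have "(\<integral>\<^sup>+\<xi>. ennreal (indicator (cball (0::real^'n) 1) \<xi>) \<partial>lborel) < \<infinity>"
        by (simp add: ennreal_indicator emeasure_cball_n)
      ultimately show ?thesis by (simp add: less_top)
    qed
    finally show ?thesis .
  qed
  define Jg where "Jg = (\<integral>\<^sup>+\<xi>. ennreal (g \<xi>) \<partial>lborel)"
  define e where "e = real CARD('n) / 2 - b / 2"
  have e: "e > -1" using b2 by (simp add: e_def b_def)
  have inner: "(\<integral>\<^sup>+x. ennreal (\<bar>U a hk (x::real^'n, t)\<bar> powr lam) \<partial>lborel) \<le> ennreal K * (ennreal (t powr e) * Jg)"
    if t: "t > 0" for t
  proof -
    define m where "m = (\<lambda>x::real^'n. if norm x \<le> sqrt t then t powr (- b / 2) else norm x powr (- b))"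
    have s: "sqrt t > 0" using t by simp
    have "(\<integral>\<^sup>+x. ennreal (\<bar>U a hk (x::real^'n, t)\<bar> powr lam) \<partial>lborel) \<le> (\<integral>\<^sup>+x. ennreal K * ennreal (m x) \<partial>lborel)"
    proof (intro nn_integral_mono)
      fix x :: "real^'n"
      have "m x \<ge> 0" by (simp add: m_def)
      thus "ennreal (\<bar>U a hk (x, t)\<bar> powr lam) \<le> ennreal K * ennreal (m x)"
        using K(2)[OF t, of x] K(1) by (simp add: m_def ennreal_mult[symmetric] ennreal_leI)
    qed
    also have "\<dots> = ennreal K * (\<integral>\<^sup>+x. ennreal (m x) \<partial>lborel)"
      by (rule nn_integral_cmult) (simp add: m_def)
    also have "(\<integral>\<^sup>+x. ennreal (m x) \<partial>lborel) = ennreal (\<bar>sqrt t\<bar> ^ DIM(real^'n)) * (\<integral>\<^sup>+\<xi>. ennreal (m (0 + sqrt t *\<^sub>R \<xi>)) \<partial>lborel)"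
      by (rule nn_integral_affine_eu) (use t in \<open>auto simp: m_def\<close>)
    also have "(\<integral>\<^sup>+\<xi>. ennreal (m (0 + sqrt t *\<^sub>R \<xi>)) \<partial>lborel) = (\<integral>\<^sup>+\<xi>. ennreal (t powr (- b / 2)) * ennreal (g \<xi>) \<partial>lborel)"
    proof (intro nn_integral_cong)
      fix \<xi> :: "real^'n"
      have "m (0 + sqrt t *\<^sub>R \<xi>) = t powr (- b / 2) * g \<xi>"
      proof (cases "norm \<xi> \<le> 1")
        case True thus ?thesis using s by (simp add: m_def g_def mult_le_cancel_left1)
      next
        case False
        hence "\<not> sqrt t * norm \<xi> \<le> sqrt t" using s by simp
        moreover have "(sqrt t * norm \<xi>) powr (-b) = t powr (- b / 2) * norm \<xi> powr (-b)"
          using s t by (simp add: powr_mult powr_half_sqrt[symmetric] powr_powr)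
        ultimately show ?thesis using False s by (simp add: m_def g_def)
      qed
      thus "ennreal (m (0 + sqrt t *\<^sub>R \<xi>)) = ennreal (t powr (- b / 2)) * ennreal (g \<xi>)"
        by (simp add: ennreal_mult g_def)
    qed
    also have "\<dots> = ennreal (t powr (- b / 2)) * Jg"
      unfolding Jg_def by (rule nn_integral_cmult) (simp add: g_def)
    also have "ennreal (\<bar>sqrt t\<bar> ^ DIM(real^'n)) * (ennreal (t powr (- b / 2)) * Jg) = ennreal (t powr e) * Jg"
    proof -
      have "\<bar>sqrt t\<bar> ^ DIM(real^'n) = t powr (real CARD('n) / 2)"
        using t by (simp add: powr_half_sqrt[symmetric] powr_realpow[symmetric] powr_powr)
      moreover have "t powr (real CARD('n) / 2) * t powr (- b / 2) = t powr (real CARD('n) / 2 + - b / 2)"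
        by (rule powr_add[symmetric])
      moreover have "real CARD('n) / 2 + - b / 2 = e" by (simp add: e_def)
      ultimately have "\<bar>sqrt t\<bar> ^ DIM(real^'n) * t powr (- b / 2) = t powr e" by simp
      thus ?thesis by (simp add: ennreal_mult[symmetric] mult.assoc[symmetric])
    qed
    finally show ?thesis .
  qed
  have outer: "(\<integral>\<^sup>+t. ennreal (t powr e) * indicator {0..T} t \<partial>lborel) = ennreal (T powr (e + 1) / (e + 1))"
    by (rule nn_integral_has_integral_lebesgue'[OF _ has_integral_powr_from_0[OF e]]) (use T in auto)
  have "(\<integral>\<^sup>+p. ennreal (norm (F p)) \<partial>lborel) = (\<integral>\<^sup>+p. ennreal (norm (F p)) \<partial>(lborel \<Otimes>\<^sub>M lborel))"
    by (simp add: lborel_prod)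
  also have "\<dots> = (\<integral>\<^sup>+t. (\<integral>\<^sup>+x. ennreal (norm (F (x, t))) \<partial>lborel) \<partial>lborel)"
    by (rule pair_sigma_finite.nn_integral_snd[OF pair_sf_lborel, symmetric]) (use Fm in \<open>simp add: lborel_prod measurable_lborel2\<close>)
  also have "\<dots> \<le> (\<integral>\<^sup>+t. ennreal K * Jg * (ennreal (t powr e) * indicator {0..T} t) \<partial>lborel)"
  proof (intro nn_integral_mono)
    fix t :: real
    show "(\<integral>\<^sup>+x. ennreal (norm (F (x, t))) \<partial>lborel) \<le> ennreal K * Jg * (ennreal (t powr e) * indicator {0..T} t)"
    proof (cases "t \<in> {0<..<T}")
      case True
      hence t: "t > 0" by simp
      have "(\<integral>\<^sup>+x. ennreal (norm (F (x, t))) \<partial>lborel) = (\<integral>\<^sup>+x. ennreal (\<bar>U a hk (x::real^'n, t)\<bar> powr lam) \<partial>lborel)"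
        using True by (intro nn_integral_cong) (simp add: F_def S_def)
      also have "\<dots> \<le> ennreal K * (ennreal (t powr e) * Jg)" by (rule inner[OF t])
      finally show ?thesis using True by (simp add: mult_ac)
    next
      case False
      hence "\<And>x. F (x, t) = 0" by (simp add: F_def S_def)
      thus ?thesis by simp
    qed
  qed
  also have "\<dots> = ennreal K * Jg * (\<integral>\<^sup>+t. ennreal (t powr e) * indicator {0..T} t \<partial>lborel)"
    by (rule nn_integral_cmult) simp
  also have "\<dots> < \<infinity>" unfolding outer using J by (simp add: Jg_def ennreal_mult_less_top)
  finally have fin: "(\<integral>\<^sup>+p. ennreal (norm (F p)) \<partial>lborel) < \<infinity>" .
  have "integrable lborel F"
    by (rule integrableI_bounded[OF _ fin]) (use Fm in \<open>simp add: measurable_lborel2\<close>)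
  thus ?thesis by (simp add: set_integrable_def F_def S_def)
qed

lemma U_two_sided:
  fixes a :: real assumes a: "0 \<le> a" "a < CARD('n)"
  shows "\<exists>c C. 0 < c \<and> 0 < C \<and> (\<forall>(x::real^'n) t. t > 0 \<and> norm x < sqrt t \<longrightarrow>
     c \<le> t powr (a/2) * U a hk (x, t) \<and> t powr (a/2) * U a hk (x, t) \<le> C)"
proof -
  obtain C0 where C0: "\<And>\<xi>::real^'n. U a hk (\<xi>, 1) \<le> C0" using U_upper[OF a] by blast
  define c where "c = (4 * pi * 1) powr (- real CARD('n) / 2) * exp (- 1) * unit_ball_vol (real CARD('n))"
  show ?thesis
  proof (rule exI[of _ c], rule exI[of _ "max C0 1"], intro conjI allI impI)
    show "0 < c" by (simp add: c_def)
    show "0 < max C0 1" by simp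
    fix x :: "real^'n" and t :: real assume h: "t > 0 \<and> norm x < sqrt t"
    hence t: "t > 0" and s: "sqrt t > 0" by auto
    have eq: "t powr (a/2) * U a hk (x, t) = U a hk (x /\<^sub>R sqrt t, 1)"
      using U_scale[OF t, of a x] t by (simp add: powr_minus field_simps)
    have "norm x / sqrt t < 1" using h s by (subst divide_less_eq_1_pos) auto
    moreover have "norm (x /\<^sub>R sqrt t) = norm x / sqrt t" using s by (simp add: divide_inverse mult.commute)
    ultimately have nx: "norm (x /\<^sub>R sqrt t) < 1" by simp
    have "c \<le> (4 * pi * 1) powr (- real CARD('n) / 2) * exp (- ((norm (x /\<^sub>R sqrt t) + 1) ^ 2) / (4 * 1)) * unit_ball_vol (real CARD('n))"
    proof -
      have "(norm (x /\<^sub>R sqrt t) + 1) ^ 2 \<le> 2 ^ 2" using nx by (intro power_mono) auto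
      hence "exp (- 1) \<le> exp (- ((norm (x /\<^sub>R sqrt t) + 1) ^ 2) / (4 * 1))" by simp
      thus ?thesis unfolding c_def by (intro mult_right_mono mult_left_mono) auto
    qed
    also have "\<dots> \<le> U a hk (x /\<^sub>R sqrt t, 1)" by (rule U_lower[OF _ a]) simp
    finally show "c \<le> t powr (a/2) * U a hk (x, t)" using eq by simp
    show "t powr (a/2) * U a hk (x, t) \<le> max C0 1" using eq C0[of "x /\<^sub>R sqrt t"] by simp
  qed
qed

theorem theorem5p2:
  fixes lam \<gamma> \<epsilon> :: real
  assumes "lam \<ge> (real CARD('n) + 2) / real CARD('n)"
    and "0 < \<epsilon>" and "\<epsilon> < 1"
    and "\<gamma> = (real CARD('n) + 2 - \<epsilon>) / (2 * lam)"
  defines "u \<equiv> (\<lambda>(p :: (real^'n) \<times> real). Psi \<gamma> (fst p) (snd p))"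
  shows "smooth_on (UNIV \<times> {0<..}) u
    \<and> (\<forall>x t. t > 0 \<longrightarrow> u (x, t) > 0)
    \<and> (\<forall>x t. t > 0 \<longrightarrow> heat_op u (x, t) = 0)
    \<and> (\<forall>T > 0. set_integrable lborel (UNIV \<times> {0<..<T}) (\<lambda>p. \<bar>u p\<bar> powr lam))
    \<and> (\<forall>t > 0. t powr \<gamma> * u (0, t) = u (0, 1))
    \<and> (\<exists>c C. 0 < c \<and> 0 < C \<and>
           (\<forall>x t. t > 0 \<and> norm x < sqrt t \<longrightarrow> c \<le> t powr \<gamma> * u (x, t) \<and> t powr \<gamma> * u (x, t) \<le> C))"
proof -
  define n where "n = real CARD('n)"
  have n1: "n \<ge> 1" by (simp add: n_def)
  have lam: "lam \<ge> (n + 2) / n" using assms(1) by (simp add: n_def)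
  have lam0: "lam > 0" using lam n1 by (smt (verit) divide_pos_pos)
  define a where "a = 2 * \<gamma>"
  have aeq: "a = (n + 2 - \<epsilon>) / lam" using assms(4) lam0 by (simp add: a_def n_def field_simps)
  have alam: "a * lam = n + 2 - \<epsilon>" using lam0 by (simp add: aeq)
  have a0: "a > 0" using aeq lam0 assms(3) n1 by simp
  have an: "a < n"
  proof -
    have "n + 2 \<le> lam * n" using lam n1 by (simp add: field_simps)
    hence "n + 2 - \<epsilon> < lam * n" using assms(2) by linarith
    thus ?thesis using lam0 by (simp add: aeq divide_less_eq mult.commute)
  qed
  have ueq: "u = U a hk"
    unfolding u_def by (auto simp: fun_eq_iff Psi_def U_def hk_def a_def)
  have an': "a < CARD('n)" using an by (simp add: n_def)
  have a0': "0 \<le> a" using a0 by simp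
  have g: "\<gamma> = a / 2" by (simp add: a_def)
  show ?thesis
    unfolding ueq
  proof (intro conjI allI impI)
    show "smooth_on (UNIV \<times> {0<..}) (U a (hk :: (real^'n) \<times> real \<Rightarrow> real))" by (rule smooth_U[OF a0' an'])
    show "U a hk (x, t) > 0" if "t > 0" for x :: "real^'n" and t using U_pos[OF that a0' an'] .
    show "heat_op (U a (hk :: (real^'n) \<times> real \<Rightarrow> real)) (x, t) = 0" if "t > 0" for x :: "real^'n" and t using heat_U[OF a0' an', of "(x,t)"] that by simp
    show "set_integrable lborel (UNIV \<times> {0<..<T}) (\<lambda>p::(real^'n)\<times>real. \<bar>U a hk p\<bar> powr lam)" if "T > 0" for T
      by (rule U_Llam[OF a0 an' lam0 _ _ that]) (use alam assms(2,3) in \<open>simp_all add: n_def\<close>)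
    show "t powr \<gamma> * U a hk (0::real^'n, t) = U a hk (0::real^'n, 1)" if "t > 0" for t
      using U_scale[OF that, of a "0::real^'n"] that by (simp add: g powr_minus field_simps)
    show "\<exists>c C. 0 < c \<and> 0 < C \<and> (\<forall>(x::real^'n) t. t > 0 \<and> norm x < sqrt t \<longrightarrow>
           c \<le> t powr \<gamma> * U a hk (x, t) \<and> t powr \<gamma> * U a hk (x, t) \<le> C)"
      using U_two_sided[OF a0' an'] by (simp add: g)
  qed
qed

end
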